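(* Let $G$ be a group, $X=\{1,\dots,d\}$, and $\psi:G\to S_d\ltimes G^d$ a homomorphism (wreath recursion). For $n\ge0$ let $K_n$ be the set of $g\in G$ such that $g(v)=v$ and $g|_v=1$ for all $v\in X^n$. Then $K_n\supseteq K_{n-1}$. If $\bigcup_{n\ge0}K_n$ equals the kernel of the action of $G$ on $X^*$ (i.e., of the epimorphism $G\to\overline{G}$), then the natural epimorphism $\mathcal{V}_\psi\to\mathcal{V}_{\overline{G}}$ is an isomorphism.
   Context: Elements of $S_d\ltimes G^d$ are written $\sigma(g_1,\dots,g_d)$ with multiplication $\sigma(g_1,\ldots,g_d)\pi(h_1,\ldots,h_d)=\sigma\pi(g_{\pi(1)}h_1,\ldots,g_{\pi(d)}h_d)$. The homomorphism $\psi$ defines an action of $G$ on the rooted tree $X^*$ of finite words by $g(xw)=\sigma(x)g_x(w)$ where $\psi(g)=\sigma(g_1,\ldots,g_d)$, and sections $g|_v\in G$ by $g|_x=g_x$ and $g|_{xv}=(g|_x)|_v$, so that $g(vw)=g(v)g|_v(w)$. $\overline{G}$ is the quotient of $G$ by the kernel of this action (a self-similar group acting faithfully on $X^*$). A complete antichain is a finite set of words in $X^*$, none a prefix of another, such that every infinite sequence has exactly one of them as prefix. $\mathcal{V}_\psi$ is the group of equivalence classes of tables $\begin{pmatrix}v_1&\cdots&v_n\\ g_1&\cdots&g_n\\ u_1&\cdots&u_n\end{pmatrix}$ with $g_i\in G$ and $\{v_i\}$, $\{u_i\}$ complete antichains, where tables are equivalent if they become equal up to permutation of columns after iteratively replacing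 a column $(v,g,u)$ by the $d$ columns $(vi,\ g_i,\ u\sigma(i))$, $i=1,\ldots,d$, with $\psi(g)=\sigma(g_1,\ldots,g_d)$; multiplication is $(w_i,g_i,u_i)_i\cdot(v_i,h_i,w_i)_i=(v_i,g_ih_i,u_i)_i$ (after bringing tables to matching form). $\mathcal{V}_{\overline{G}}$ is defined in the same way with $\overline{G}$ (equivalently, the group of homeomorphisms $g$ of $X^\omega$ with $g(v_iw)=u_i\bar g_i(w)$), and the natural epimorphism replaces each $g_i$ by its image in $\overline{G}$. *)

theory Defs
  imports "HOL-Algebra.Group"
begin

text \<open>Alphabet X = {0..<d} (the paper's {1..d}, shifted).
A wreath recursion psi : G -> S_d semidirect G^d is given by its components:
psi(g) = sigma_g (g|_0, ..., g|_(d-1)), with sigma_g = perm g and g|_i = sec g i.\<close>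

type_synonym 'a table = "(nat list \<times> 'a \<times> nat list) set"

definition wreath_recursion ::
  "('g, 'b) monoid_scheme \<Rightarrow> nat \<Rightarrow> ('g \<Rightarrow> nat \<Rightarrow> nat) \<Rightarrow> ('g \<Rightarrow> nat \<Rightarrow> 'g) \<Rightarrow> bool" where
  "wreath_recursion G d perm sec \<longleftrightarrow>
     (\<forall>g\<in>carrier G. bij_betw (perm g) {0..<d} {0..<d}) \<and>
     (\<forall>g\<in>carrier G. \<forall>i<d. sec g i \<in> carrier G) \<and>
     (\<forall>g\<in>carrier G. \<forall>h\<in>carrier G. \<forall>i<d.
        perm (g \<otimes>\<^bsub>G\<^esub> h) i = perm g (perm h i) \<and>
        sec (g \<otimes>\<^bsub>G\<^esub> h) i = sec g (perm h i) \<otimes>\<^bsub>G\<^esub> sec h i)"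

fun act :: "('g \<Rightarrow> nat \<Rightarrow> nat) \<Rightarrow> ('g \<Rightarrow> nat \<Rightarrow> 'g) \<Rightarrow> 'g \<Rightarrow> nat list \<Rightarrow> nat list" where
  "act perm sec g [] = []"
| "act perm sec g (x # w) = perm g x # act perm sec (sec g x) w"

fun secw :: "('g \<Rightarrow> nat \<Rightarrow> 'g) \<Rightarrow> 'g \<Rightarrow> nat list \<Rightarrow> 'g" where
  "secw sec g [] = g"
| "secw sec g (x # w) = secw sec (sec g x) w"

definition Kset ::
  "('g, 'b) monoid_scheme \<Rightarrow> nat \<Rightarrow> ('g \<Rightarrow> nat \<Rightarrow> nat) \<Rightarrow> ('g \<Rightarrow> nat \<Rightarrow> 'g) \<Rightarrow> nat \<Rightarrow> 'g set" where
  "Kset G d perm sec n = {g \<in> carrier G. \<forall>v\<in>lists {0..<d}. length v = n \<longrightarrow>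
       act perm sec g v = v \<and> secw sec g v = \<one>\<^bsub>G\<^esub>}"

definition action_kernel ::
  "('g, 'b) monoid_scheme \<Rightarrow> nat \<Rightarrow> ('g \<Rightarrow> nat \<Rightarrow> nat) \<Rightarrow> ('g \<Rightarrow> nat \<Rightarrow> 'g) \<Rightarrow> 'g set" where
  "action_kernel G d perm sec = {g \<in> carrier G. \<forall>w\<in>lists {0..<d}. act perm sec g w = w}"

text \<open>The faithful quotient G-bar, realised as the group of maps of X^* induced by G
(restricted to X^*), with its induced wreath recursion.\<close>

definition actbar :: "nat \<Rightarrow> ('g \<Rightarrow> nat \<Rightarrow> nat) \<Rightarrow> ('g \<Rightarrow> nat \<Rightarrow> 'g) \<Rightarrow> 'g \<Rightarrow> nat list \<Rightarrow> nat list" where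
  "actbar d perm sec g = restrict (act perm sec g) (lists {0..<d})"

definition Gbar ::
  "('g, 'b) monoid_scheme \<Rightarrow> nat \<Rightarrow> ('g \<Rightarrow> nat \<Rightarrow> nat) \<Rightarrow> ('g \<Rightarrow> nat \<Rightarrow> 'g) \<Rightarrow> (nat list \<Rightarrow> nat list) monoid" where
  "Gbar G d perm sec = \<lparr>carrier = actbar d perm sec ` carrier G,
      monoid.mult = (\<lambda>f h. restrict (f \<circ> h) (lists {0..<d})),
      one = restrict id (lists {0..<d})\<rparr>"

definition permbar :: "(nat list \<Rightarrow> nat list) \<Rightarrow> nat \<Rightarrow> nat" where
  "permbar f i = hd (f [i])"

definition secbar :: "nat \<Rightarrow> (nat list \<Rightarrow> nat list) \<Rightarrow> nat \<Rightarrow> (nat list \<Rightarrow> nat list)" where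
  "secbar d f i = restrict (\<lambda>w. tl (f (i # w))) (lists {0..<d})"

definition complete_antichain :: "nat \<Rightarrow> nat list set \<Rightarrow> bool" where
  "complete_antichain d A \<longleftrightarrow> finite A \<and> A \<subseteq> lists {0..<d} \<and>
     (\<forall>u\<in>A. \<forall>v\<in>A. (\<exists>w. v = u @ w) \<longrightarrow> u = v) \<and>
     (\<forall>f::nat \<Rightarrow> nat. (\<forall>n. f n < d) \<longrightarrow> (\<exists>!v. v \<in> A \<and> v = map f [0..<length v]))"

text \<open>Tables: a table is the finite set of its columns (v, g, u), so that tables which
agree up to a permutation of columns are literally equal.\<close>
definition valid_table :: "('a, 'b) monoid_scheme \<Rightarrow> nat \<Rightarrow> 'a table \<Rightarrow> bool" where
  "valid_table H d T \<longleftrightarrow> finite T \<and> (\<forall>(v, g, u)\<in>T. g \<in> carrier H) \<and>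
     inj_on (\<lambda>(v, g, u). v) T \<and> inj_on (\<lambda>(v, g, u). u) T \<and>
     complete_antichain d ((\<lambda>(v, g, u). v) ` T) \<and>
     complete_antichain d ((\<lambda>(v, g, u). u) ` T)"

definition expand1 :: "nat \<Rightarrow> ('a \<Rightarrow> nat \<Rightarrow> nat) \<Rightarrow> ('a \<Rightarrow> nat \<Rightarrow> 'a) \<Rightarrow> 'a table \<Rightarrow> 'a table \<Rightarrow> bool" where
  "expand1 d perm sec T T' \<longleftrightarrow> (\<exists>v g u. (v, g, u) \<in> T \<and>
      T' = (T - {(v, g, u)}) \<union> (\<lambda>i. (v @ [i], sec g i, u @ [perm g i])) ` {0..<d})"

definition table_rel ::
  "('a, 'b) monoid_scheme \<Rightarrow> nat \<Rightarrow> ('a \<Rightarrow> nat \<Rightarrow> nat) \<Rightarrow> ('a \<Rightarrow> nat \<Rightarrow> 'a) \<Rightarrow> ('a table \<times> 'a table) set" where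
  "table_rel H d perm sec = {(T, T'). valid_table H d T \<and> valid_table H d T' \<and>
     (\<lambda>A B. valid_table H d A \<and> valid_table H d B \<and>
            (expand1 d perm sec A B \<or> expand1 d perm sec B A))\<^sup>*\<^sup>* T T'}"

definition compose_tables :: "('a, 'b) monoid_scheme \<Rightarrow> 'a table \<Rightarrow> 'a table \<Rightarrow> 'a table" where
  "compose_tables H T1 T2 = {(v, g \<otimes>\<^bsub>H\<^esub> h, u) | v g h u w. (w, g, u) \<in> T1 \<and> (v, h, w) \<in> T2}"

definition V_group ::
  "('a, 'b) monoid_scheme \<Rightarrow> nat \<Rightarrow> ('a \<Rightarrow> nat \<Rightarrow> nat) \<Rightarrow> ('a \<Rightarrow> nat \<Rightarrow> 'a) \<Rightarrow> ('a table set) monoid" where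
  "V_group H d perm sec = \<lparr>carrier = {T. valid_table H d T} // table_rel H d perm sec,
      monoid.mult = (\<lambda>A B. SOME C. \<exists>T1\<in>A. \<exists>T2\<in>B.
          (\<lambda>(v, g, u). v) ` T1 = (\<lambda>(v, g, u). u) ` T2 \<and>
          C = table_rel H d perm sec `` {compose_tables H T1 T2}),
      one = table_rel H d perm sec `` {{([], \<one>\<^bsub>H\<^esub>, [])}}\<rparr>"

definition natural_map ::
  "('g, 'b) monoid_scheme \<Rightarrow> nat \<Rightarrow> ('g \<Rightarrow> nat \<Rightarrow> nat) \<Rightarrow> ('g \<Rightarrow> nat \<Rightarrow> 'g) \<Rightarrow>
   'g table set \<Rightarrow> (nat list \<Rightarrow> nat list) table set" where
  "natural_map G d perm sec A =
     table_rel (Gbar G d perm sec) d permbar (secbar d) ``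
       {(\<lambda>(v, g, u). (v, actbar d perm sec g, u)) ` (SOME T. T \<in> A)}"

end

theory Submission
  imports Defs
begin


definition WR :: "('a,'b) monoid_scheme \<Rightarrow> nat \<Rightarrow> ('a\<Rightarrow>nat\<Rightarrow>nat) \<Rightarrow> ('a\<Rightarrow>nat\<Rightarrow>'a) \<Rightarrow> bool" where
 "WR H d p s \<longleftrightarrow> (\<forall>g\<in>carrier H. bij_betw (p g) {0..<d} {0..<d}) \<and>
    (\<forall>g\<in>carrier H. \<forall>i<d. s g i \<in> carrier H) \<and>
    (\<forall>g\<in>carrier H. \<forall>h\<in>carrier H. g \<otimes>\<^bsub>H\<^esub> h \<in> carrier H \<and>
       (\<forall>i<d. p (g \<otimes>\<^bsub>H\<^esub> h) i = p g (p h i) \<and> s (g \<otimes>\<^bsub>H\<^esub> h) i = s g (p h i) \<otimes>\<^bsub>H\<^esub> s h i))"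

lemma WR_bij: "WR H d p s \<Longrightarrow> g \<in> carrier H \<Longrightarrow> bij_betw (p g) {0..<d} {0..<d}"
  unfolding WR_def by blast
lemma WR_p: "WR H d p s \<Longrightarrow> g \<in> carrier H \<Longrightarrow> i < d \<Longrightarrow> p g i < d"
  proof -
  assume a: "WR H d p s" "g \<in> carrier H" "i < d"
  have "i \<in> {0..<d}" using a by simp
  from bij_betw_apply[OF WR_bij[OF a(1,2)] this] show ?thesis by simp
qed
lemma WR_s: "WR H d p s \<Longrightarrow> g \<in> carrier H \<Longrightarrow> i < d \<Longrightarrow> s g i \<in> carrier H"
  unfolding WR_def by blast
lemma WR_m: "WR H d p s \<Longrightarrow> g \<in> carrier H \<Longrightarrow> h \<in> carrier H \<Longrightarrow> g \<otimes>\<^bsub>H\<^esub> h \<in> carrier H"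
  unfolding WR_def by blast
lemma WR_pm: "WR H d p s \<Longrightarrow> g \<in> carrier H \<Longrightarrow> h \<in> carrier H \<Longrightarrow> i < d \<Longrightarrow> p (g \<otimes>\<^bsub>H\<^esub> h) i = p g (p h i)"
  unfolding WR_def by blast
lemma WR_sm: "WR H d p s \<Longrightarrow> g \<in> carrier H \<Longrightarrow> h \<in> carrier H \<Longrightarrow> i < d \<Longrightarrow> s (g \<otimes>\<^bsub>H\<^esub> h) i = s g (p h i) \<otimes>\<^bsub>H\<^esub> s h i"
  unfolding WR_def by blast

lemma length_act[simp]: "length (act p s g w) = length w"
  by (induction w arbitrary: g) auto

lemma act_append: "act p s g (a @ b) = act p s g a @ act p s (secw s g a) b"
  by (induction a arbitrary: g) auto

lemma secw_append: "secw s g (a @ b) = secw s (secw s g a) b"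
  by (induction a arbitrary: g) auto

lemma act_lists: "WR H d p s \<Longrightarrow> g \<in> carrier H \<Longrightarrow> w \<in> lists {0..<d} \<Longrightarrow> act p s g w \<in> lists {0..<d}"
  by (induction w arbitrary: g) (auto simp: WR_p WR_s)

lemma secw_carrier: "WR H d p s \<Longrightarrow> g \<in> carrier H \<Longrightarrow> w \<in> lists {0..<d} \<Longrightarrow> secw s g w \<in> carrier H"
  by (induction w arbitrary: g) (auto simp: WR_s)

lemma act_mult: "WR H d p s \<Longrightarrow> g \<in> carrier H \<Longrightarrow> h \<in> carrier H \<Longrightarrow> w \<in> lists {0..<d} \<Longrightarrow>
   act p s (g \<otimes>\<^bsub>H\<^esub> h) w = act p s g (act p s h w) \<and>
   secw s (g \<otimes>\<^bsub>H\<^esub> h) w = secw s g (act p s h w) \<otimes>\<^bsub>H\<^esub> secw s h w"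
proof (induction w arbitrary: g h)
  case Nil then show ?case by simp
next
  case (Cons x w)
  then have x: "x < d" and w: "w \<in> lists {0..<d}" by auto
  have px: "p h x < d" using Cons.prems x WR_p by metis
  have c1: "s g (p h x) \<in> carrier H" using Cons.prems px WR_s by metis
  have c2: "s h x \<in> carrier H" using Cons.prems x WR_s by metis
  have IH: "act p s (s g (p h x) \<otimes>\<^bsub>H\<^esub> s h x) w = act p s (s g (p h x)) (act p s (s h x) w) \<and>
   secw s (s g (p h x) \<otimes>\<^bsub>H\<^esub> s h x) w = secw s (s g (p h x)) (act p s (s h x) w) \<otimes>\<^bsub>H\<^esub> secw s (s h x) w"
    using Cons.IH[OF Cons.prems(1) c1 c2 w] .
  have e1: "p (g \<otimes>\<^bsub>H\<^esub> h) x = p g (p h x)" using WR_pm Cons.prems x by metis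
  have e2: "s (g \<otimes>\<^bsub>H\<^esub> h) x = s g (p h x) \<otimes>\<^bsub>H\<^esub> s h x" using WR_sm Cons.prems x by metis
  show ?case unfolding act.simps secw.simps e1 e2 using IH by simp
qed

definition pfx :: "nat list \<Rightarrow> nat list \<Rightarrow> bool" where
  "pfx a b \<longleftrightarrow> (\<exists>w. b = a @ w)"

abbreviation vs :: "('x \<times> 'y \<times> 'z) set \<Rightarrow> 'x set" where
  "vs T \<equiv> (\<lambda>(v, g, u). v) ` T"
abbreviation us :: "('x \<times> 'y \<times> 'z) set \<Rightarrow> 'z set" where
  "us T \<equiv> (\<lambda>(v, g, u). u) ` T"

lemma ca_antichain: "complete_antichain d A \<Longrightarrow> a \<in> A \<Longrightarrow> b \<in> A \<Longrightarrow> pfx a b \<Longrightarrow> a = b"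
  unfolding complete_antichain_def pfx_def by blast

lemma pfx_comparable: "pfx a x \<Longrightarrow> pfx b x \<Longrightarrow> pfx a b \<or> pfx b a"
  unfolding pfx_def by (metis append_eq_append_conv2)

lemma ca_pfx_unique: "complete_antichain d A \<Longrightarrow> a \<in> A \<Longrightarrow> b \<in> A \<Longrightarrow> pfx a x \<Longrightarrow> pfx b x \<Longrightarrow> a = b"
  by (metis ca_antichain pfx_comparable)

lemma map_f_pfx: "a = map f [0..<length a] \<Longrightarrow> b = map f [0..<length b] \<Longrightarrow> length a \<le> length b \<Longrightarrow> pfx a b"
proof -
  assume a: "a = map f [0..<length a]" and b: "b = map f [0..<length b]" and l: "length a \<le> length b"
  have "[0..<length b] = [0..<length a] @ [length a..<length b]"
    using l by (metis le_add_diff_inverse upt_add_eq_append zero_le)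
  then have "b = a @ map f [length a..<length b]" using a b by (metis map_append)
  then show ?thesis unfolding pfx_def by blast
qed

lemma antichain_complete_unique:
  fixes A :: "nat list set"
  assumes "\<forall>u\<in>A. \<forall>v\<in>A. (\<exists>w. v = u @ w) \<longrightarrow> u = v"
    and "a \<in> A" "a = map f [0..<length a]" "b \<in> A" "b = map f [0..<length b]"
  shows "a = b"
proof (cases "length a \<le> length b")
  case True
  then have "pfx a b" using assms map_f_pfx by blast
  then show ?thesis using assms(1,2,4) unfolding pfx_def by blast
next
  case False
  then have "pfx b a" using assms map_f_pfx[of b f a] by simp
  then show ?thesis using assms(1,2,4) unfolding pfx_def by metis
qed

lemma ca_P2:
  assumes "complete_antichain d A" "x \<in> lists {0..<d}" "x \<noteq> []" "\<forall>a\<in>A. length a \<le> length x"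
  shows "\<exists>a\<in>A. pfx a x"
proof -
  have d: "0 < d" using assms(2,3) by (cases x) auto
  define f where "f n = (if n < length x then x ! n else 0)" for n
  have "\<forall>n. f n < d" using assms(2) d unfolding f_def by (auto simp: in_lists_conv_set)
  then obtain a where a: "a \<in> A" "a = map f [0..<length a]"
    using assms(1) unfolding complete_antichain_def by blast
  have "length a \<le> length x" using assms(4) a by auto
  have "\<forall>i<length a. a ! i = x ! i"
  proof (intro allI impI)
    fix i assume i: "i < length a"
    have "a ! i = f i" using a(2) i by (metis add_0 diff_zero length_map length_upt nth_map_upt)
    then show "a ! i = x ! i" using i \<open>length a \<le> length x\<close> unfolding f_def by simp
  qed
  then have "a = take (length a) x" using \<open>length a \<le> length x\<close>
    by (simp add: nth_equalityI)
  then show ?thesis using a(1) unfolding pfx_def by (metis append_take_drop_id)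
qed

lemma ca_expand:
  assumes ca: "complete_antichain d A" and v: "v \<in> A"
  shows "complete_antichain d ((A - {v}) \<union> (\<lambda>i. v @ [i]) ` {0..<d})"
proof -
  let ?A = "(A - {v}) \<union> (\<lambda>i. v @ [i]) ` {0..<d}"
  have finA: "finite A" using ca unfolding complete_antichain_def by blast
  have fin: "finite ?A" using finA by blast
  have subA: "A \<subseteq> lists {0..<d}" using ca unfolding complete_antichain_def by blast
  have vl: "v \<in> lists {0..<d}" using subA v by blast
  have sub: "?A \<subseteq> lists {0..<d}"
  proof
    fix x assume "x \<in> ?A"
    then show "x \<in> lists {0..<d}"
    proof
      assume "x \<in> A - {v}" then show ?thesis using subA by blast
    next
      assume "x \<in> (\<lambda>i. v @ [i]) ` {0..<d}"
      then obtain i where "i < d" "x = v @ [i]" by auto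
      then show ?thesis using vl by simp
    qed
  qed
  have ac: "\<forall>a\<in>?A. \<forall>b\<in>?A. (\<exists>w. b = a @ w) \<longrightarrow> a = b"
  proof (intro ballI impI)
    fix a b assume a: "a \<in> ?A" and b: "b \<in> ?A" and ab: "\<exists>w. b = a @ w"
    then have pab: "pfx a b" unfolding pfx_def by blast
    show "a = b"
    proof (cases "a \<in> A - {v}")
      case aA: True
      show ?thesis
      proof (cases "b \<in> A - {v}")
        case True then show ?thesis using aA pab ca_antichain[OF ca, of a b] by simp
      next
        case False
        then obtain i where bi: "b = v @ [i]" using b by auto
        have "pfx v b" using bi unfolding pfx_def by blast
        then have "pfx a v \<or> pfx v a" using pab pfx_comparable by blast
        then have "a = v" using aA v ca_antichain[OF ca] by auto
        then show ?thesis using aA by simp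
      qed
    next
      case False
      then obtain i where ai: "a = v @ [i]" using a by auto
      show ?thesis
      proof (cases "b \<in> A - {v}")
        case True
        have "pfx v b" using pab ai unfolding pfx_def by auto
        then have "v = b" using True v ca_antichain[OF ca, of v b] by simp
        then show ?thesis using True by simp
      next
        case False
        then obtain j where "b = v @ [j]" using b by auto
        then show ?thesis using ab ai by auto
      qed
    qed
  qed
  have cpl: "\<forall>f::nat \<Rightarrow> nat. (\<forall>n. f n < d) \<longrightarrow> (\<exists>!a. a \<in> ?A \<and> a = map f [0..<length a])"
  proof (intro allI impI)
    fix f :: "nat \<Rightarrow> nat" assume f: "\<forall>n. f n < d"
    have "\<exists>!a. a \<in> A \<and> a = map f [0..<length a]"
      using ca f unfolding complete_antichain_def by blast
    then obtain a where a: "a \<in> A" "a = map f [0..<length a]" by blast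
    have ex: "\<exists>a. a \<in> ?A \<and> a = map f [0..<length a]"
    proof (cases "a = v")
      case True
      have "f (length v) \<in> {0..<d}" using f by simp
      then have "v @ [f (length v)] \<in> ?A" by blast
      moreover have "v @ [f (length v)] = map f [0..<length (v @ [f (length v)])]"
        using a True by simp
      ultimately show ?thesis by blast
    next
      case False then show ?thesis using a by blast
    qed
    then obtain a' where a': "a' \<in> ?A" "a' = map f [0..<length a']" by blast
    show "\<exists>!a. a \<in> ?A \<and> a = map f [0..<length a]"
    proof (rule ex1I[of _ a'])
      show "a' \<in> ?A \<and> a' = map f [0..<length a']" using a' by blast
    next
      fix b assume "b \<in> ?A \<and> b = map f [0..<length b]"
      then show "b = a'" using antichain_complete_unique[OF ac, of b f a'] a' by blast
    qed
  qed
  show ?thesis unfolding complete_antichain_def using fin sub ac cpl by blast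
qed




definition R :: "nat \<Rightarrow> ('a\<Rightarrow>nat\<Rightarrow>nat) \<Rightarrow> ('a\<Rightarrow>nat\<Rightarrow>'a) \<Rightarrow> 'a table \<Rightarrow> 'a table" where
 "R d p s T = {(v @ w, secw s g w, u @ act p s g w) | v g u w. (v, g, u) \<in> T \<and> w \<in> lists {0..<d}}"

definition agree_from :: "nat \<Rightarrow> 'a table \<Rightarrow> 'a table \<Rightarrow> bool" where
 "agree_from M X Y \<longleftrightarrow> (\<forall>x g y. M \<le> length x \<longrightarrow> ((x, g, y) \<in> X \<longleftrightarrow> (x, g, y) \<in> Y))"

definition eq_ev :: "nat \<Rightarrow> ('a\<Rightarrow>nat\<Rightarrow>nat) \<Rightarrow> ('a\<Rightarrow>nat\<Rightarrow>'a) \<Rightarrow> 'a table \<Rightarrow> 'a table \<Rightarrow> bool" where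
 "eq_ev d p s T T' \<longleftrightarrow> (\<exists>M. agree_from M (R d p s T) (R d p s T'))"

lemma agree_sym: "agree_from M X Y \<Longrightarrow> agree_from M Y X"
  unfolding agree_from_def by blast
lemma agree_mono: "agree_from M X Y \<Longrightarrow> M \<le> M' \<Longrightarrow> agree_from M' X Y"
  unfolding agree_from_def by auto
lemma agree_trans: "agree_from M X Y \<Longrightarrow> agree_from M' Y Z \<Longrightarrow> agree_from (max M M') X Z"
  unfolding agree_from_def by auto

lemma eq_ev_refl: "eq_ev d p s T T"
  unfolding eq_ev_def agree_from_def by blast
lemma eq_ev_sym: "eq_ev d p s T T' \<Longrightarrow> eq_ev d p s T' T"
  unfolding eq_ev_def using agree_sym by blast
lemma eq_ev_trans: "eq_ev d p s T T' \<Longrightarrow> eq_ev d p s T' T'' \<Longrightarrow> eq_ev d p s T T''"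
  unfolding eq_ev_def using agree_trans by blast

definition exp1 :: "nat \<Rightarrow> ('a\<Rightarrow>nat\<Rightarrow>nat) \<Rightarrow> ('a\<Rightarrow>nat\<Rightarrow>'a) \<Rightarrow> nat list \<Rightarrow> 'a \<Rightarrow> nat list \<Rightarrow> 'a table \<Rightarrow> 'a table" where
  "exp1 d p s v g u T = (T - {(v, g, u)}) \<union> (\<lambda>i. (v @ [i], s g i, u @ [p g i])) ` {0..<d}"

lemma expand1_exp1: "expand1 d p s T T' \<longleftrightarrow> (\<exists>v g u. (v, g, u) \<in> T \<and> T' = exp1 d p s v g u T)"
  unfolding expand1_def exp1_def by blast

lemma R_I: "(v, g, u) \<in> T \<Longrightarrow> w \<in> lists {0..<d} \<Longrightarrow> (v @ w, secw s g w, u @ act p s g w) \<in> R d p s T"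
  unfolding R_def by blast

lemma R_I': "(v, g, u) \<in> T \<Longrightarrow> w \<in> lists {0..<d} \<Longrightarrow> t = (v @ w, secw s g w, u @ act p s g w) \<Longrightarrow> t \<in> R d p s T"
  using R_I by metis

lemma R_E: assumes "t \<in> R d p s T"
  obtains v g u w where "t = (v @ w, secw s g w, u @ act p s g w)" "(v, g, u) \<in> T" "w \<in> lists {0..<d}"
  using assms unfolding R_def by blast

lemma R_exp1_sub: assumes c: "(v, g, u) \<in> T" shows "R d p s (exp1 d p s v g u T) \<subseteq> R d p s T"
proof
  fix t assume t: "t \<in> R d p s (exp1 d p s v g u T)"
  obtain v' g' u' w where t': "t = (v' @ w, secw s g' w, u' @ act p s g' w)"
     "(v', g', u') \<in> exp1 d p s v g u T" "w \<in> lists {0..<d}"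
    by (rule R_E[OF t])
  show "t \<in> R d p s T"
  proof (cases "(v', g', u') \<in> T - {(v, g, u)}")
    case True then show ?thesis using R_I'[of v' g' u' T w d t s p] t' by blast
  next
    case False
    then have "(v', g', u') \<in> (\<lambda>i. (v @ [i], s g i, u @ [p g i])) ` {0..<d}"
      using t'(2) unfolding exp1_def by blast
    then obtain i where i: "i < d" "v' = v @ [i]" "g' = s g i" "u' = u @ [p g i]"
      by auto
    have "t = (v @ (i # w), secw s g (i # w), u @ act p s g (i # w))" using t' i by simp
    moreover have "i # w \<in> lists {0..<d}" using i t' by simp
    ultimately show ?thesis using R_I'[OF c] by blast
  qed
qed

lemma R_exp1_sup: assumes c: "(v, g, u) \<in> T"
  shows "R d p s T \<subseteq> insert (v, g, u) (R d p s (exp1 d p s v g u T))"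
proof
  fix t assume t: "t \<in> R d p s T"
  obtain v' g' u' w where t': "t = (v' @ w, secw s g' w, u' @ act p s g' w)"
     "(v', g', u') \<in> T" "w \<in> lists {0..<d}"
    by (rule R_E[OF t])
  show "t \<in> insert (v, g, u) (R d p s (exp1 d p s v g u T))"
  proof (cases "(v', g', u') = (v, g, u)")
    case False
    then have "(v', g', u') \<in> exp1 d p s v g u T" using t'(2) unfolding exp1_def by blast
    from R_I'[OF this t'(3) t'(1)] show ?thesis by blast
  next
    case True
    show ?thesis
    proof (cases w)
      case Nil then show ?thesis using t' True by simp
    next
      case (Cons i w')
      then have i: "i < d" "w' \<in> lists {0..<d}" using t' by auto
      then have ch: "(v @ [i], s g i, u @ [p g i]) \<in> exp1 d p s v g u T" unfolding exp1_def by auto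
      have "t = ((v @ [i]) @ w', secw s (s g i) w', (u @ [p g i]) @ act p s (s g i) w')"
        using t' True Cons by simp
      from R_I'[OF ch i(2) this] show ?thesis by blast
    qed
  qed
qed

lemma expand1_eq_ev: "expand1 d p s A B \<Longrightarrow> eq_ev d p s A B"
proof -
  assume "expand1 d p s A B"
  then obtain v g u where c: "(v, g, u) \<in> A" and B: "B = exp1 d p s v g u A"
    unfolding expand1_exp1 by blast
  have s1: "R d p s B \<subseteq> R d p s A" using R_exp1_sub[OF c] B by blast
  have s2: "R d p s A \<subseteq> insert (v, g, u) (R d p s B)" using R_exp1_sup[OF c] B by blast
  have "agree_from (Suc (length v)) (R d p s A) (R d p s B)"
    unfolding agree_from_def
  proof (intro allI impI)
    fix x :: "nat list" and g' y assume l: "Suc (length v) \<le> length x"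
    then have "(x, g', y) \<noteq> (v, g, u)" by auto
    then show "((x, g', y) \<in> R d p s A) = ((x, g', y) \<in> R d p s B)" using s1 s2 by blast
  qed
  then show ?thesis unfolding eq_ev_def by blast
qed

abbreviation step where
  "step H d p s \<equiv> (\<lambda>A B. valid_table H d A \<and> valid_table H d B \<and>
            (expand1 d p s A B \<or> expand1 d p s B A))"

lemma table_rel_iff: "(T, T') \<in> table_rel H d p s \<longleftrightarrow> valid_table H d T \<and> valid_table H d T' \<and> (step H d p s)\<^sup>*\<^sup>* T T'"
  unfolding table_rel_def by simp

lemma rel_imp_eq_ev: "(T, T') \<in> table_rel H d p s \<Longrightarrow> eq_ev d p s T T'"
proof -
  assume "(T, T') \<in> table_rel H d p s"
  then have "(step H d p s)\<^sup>*\<^sup>* T T'" unfolding table_rel_iff by blast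
  then show ?thesis
  proof (induction rule: rtranclp_induct)
    case base then show ?case by (rule eq_ev_refl)
  next
    case (step y z)
    then have "eq_ev d p s y z" using expand1_eq_ev eq_ev_sym by blast
    then show ?case using step.IH eq_ev_trans by blast
  qed
qed

lemma rel_valid: "(T, T') \<in> table_rel H d p s \<Longrightarrow> valid_table H d T \<and> valid_table H d T'"
  unfolding table_rel_iff by blast

lemma rel_refl: "valid_table H d T \<Longrightarrow> (T, T) \<in> table_rel H d p s"
  unfolding table_rel_iff by blast

lemma rel_sym: "(T, T') \<in> table_rel H d p s \<Longrightarrow> (T', T) \<in> table_rel H d p s"
proof -
  assume a: "(T, T') \<in> table_rel H d p s"
  then have "(step H d p s)\<^sup>*\<^sup>* T T'" unfolding table_rel_iff by blast
  then have "(step H d p s)\<^sup>*\<^sup>* T' T"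
  proof (induction rule: rtranclp_induct)
    case base then show ?case by simp
  next
    case (step y z)
    then have "step H d p s z y" by blast
    show ?case using converse_rtranclp_into_rtranclp[OF \<open>step H d p s z y\<close> step.IH] .
  qed
  then show ?thesis using a unfolding table_rel_iff by blast
qed

lemma rel_trans: "(T, T') \<in> table_rel H d p s \<Longrightarrow> (T', T'') \<in> table_rel H d p s \<Longrightarrow> (T, T'') \<in> table_rel H d p s"
proof -
  assume a: "(T, T') \<in> table_rel H d p s" and b: "(T', T'') \<in> table_rel H d p s"
  have "(step H d p s)\<^sup>*\<^sup>* T T'" "(step H d p s)\<^sup>*\<^sup>* T' T''" using a b unfolding table_rel_iff by blast+
  then have "(step H d p s)\<^sup>*\<^sup>* T T''" by (rule rtranclp_trans)
  then show ?thesis using a b unfolding table_rel_iff by blast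
qed

lemma valid_ca_vs: "valid_table H d T \<Longrightarrow> complete_antichain d (vs T)"
  unfolding valid_table_def by blast
lemma valid_ca_us: "valid_table H d T \<Longrightarrow> complete_antichain d (us T)"
  unfolding valid_table_def by blast
lemma valid_finite: "valid_table H d T \<Longrightarrow> finite T"
  unfolding valid_table_def by blast
lemma valid_carrier: "valid_table H d T \<Longrightarrow> (v, g, u) \<in> T \<Longrightarrow> g \<in> carrier H"
  unfolding valid_table_def by blast
lemma valid_inj_v: assumes val: "valid_table H d T" and a: "(v, g, u) \<in> T" and b: "(v, g', u') \<in> T"
  shows "g' = g \<and> u' = u"
proof -
  have inj: "inj_on (\<lambda>(v, g, u). v) T" using val unfolding valid_table_def by blast
  have "(v, g', u') = (v, g, u)" by (rule inj_onD[OF inj]) (simp_all add: a b)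
  then show ?thesis by simp
qed
lemma valid_inj_u: assumes val: "valid_table H d T" and a: "(v, g, u) \<in> T" and b: "(v', g', u) \<in> T"
  shows "g' = g \<and> v' = v"
proof -
  have inj: "inj_on (\<lambda>(v, g, u). u) T" using val unfolding valid_table_def by blast
  have "(v', g', u) = (v, g, u)" by (rule inj_onD[OF inj]) (simp_all add: a b)
  then show ?thesis by simp
qed
lemma valid_vs_lists: assumes val: "valid_table H d T" and a: "(v, g, u) \<in> T" shows "v \<in> lists {0..<d}"
proof -
  have "vs T \<subseteq> lists {0..<d}" using valid_ca_vs[OF val] unfolding complete_antichain_def by blast
  moreover have "v \<in> vs T" using a by force
  ultimately show ?thesis by blast
qed
lemma valid_us_lists: assumes val: "valid_table H d T" and a: "(v, g, u) \<in> T" shows "u \<in> lists {0..<d}"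
proof -
  have "us T \<subseteq> lists {0..<d}" using valid_ca_us[OF val] unfolding complete_antichain_def by blast
  moreover have "u \<in> us T" using a by force
  ultimately show ?thesis by blast
qed

lemma valid_exp1:
  assumes wr: "WR H d p s" and val: "valid_table H d T" and c: "(v, g, u) \<in> T"
  shows "valid_table H d (exp1 d p s v g u T)"
proof -
  let ?T = "exp1 d p s v g u T"
  have gc: "g \<in> carrier H" using valid_carrier[OF val c] .
  have bij: "bij_betw (p g) {0..<d} {0..<d}" using WR_bij[OF wr gc] .
  have injp: "inj_on (p g) {0..<d}" using bij bij_betw_def by blast
  have cav: "complete_antichain d (vs T)" using valid_ca_vs[OF val] .
  have cau: "complete_antichain d (us T)" using valid_ca_us[OF val] .
  have vv: "v \<in> vs T" using c by force
  have uu: "u \<in> us T" using c by force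
  have fin: "finite ?T" using valid_finite[OF val] unfolding exp1_def by blast
  have car: "\<forall>(v', g', u')\<in>?T. g' \<in> carrier H"
    unfolding exp1_def using valid_carrier[OF val] WR_s[OF wr gc] by auto
  have vsT: "vs ?T = (vs T - {v}) \<union> (\<lambda>i. v @ [i]) ` {0..<d}"
  proof -
    have "vs (T - {(v, g, u)}) = vs T - {v}"
    proof
      show "vs (T - {(v, g, u)}) \<subseteq> vs T - {v}"
      proof
        fix x assume "x \<in> vs (T - {(v, g, u)})"
        then obtain g' u' where x1: "(x, g', u') \<in> T" and x2: "(x, g', u') \<noteq> (v, g, u)" by auto
        have "x \<noteq> v"
        proof
          assume "x = v"
          then have "g' = g \<and> u' = u" using valid_inj_v[OF val c, of g' u'] x1 by simp
          then show False using x2 \<open>x = v\<close> by simp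
        qed
        then show "x \<in> vs T - {v}" using x1 by force
      qed
    qed force
    then show ?thesis unfolding exp1_def image_Un by (simp add: image_image)
  qed
  have usT: "us ?T = (us T - {u}) \<union> (\<lambda>i. u @ [i]) ` {0..<d}"
  proof -
    have "us (T - {(v, g, u)}) = us T - {u}"
    proof
      show "us (T - {(v, g, u)}) \<subseteq> us T - {u}"
      proof
        fix x assume "x \<in> us (T - {(v, g, u)})"
        then obtain g' v' where x1: "(v', g', x) \<in> T" and x2: "(v', g', x) \<noteq> (v, g, u)" by auto
        have "x \<noteq> u"
        proof
          assume "x = u"
          then have "g' = g \<and> v' = v" using valid_inj_u[OF val c, of v' g'] x1 by simp
          then show False using x2 \<open>x = u\<close> by simp
        qed
        then show "x \<in> us T - {u}" using x1 by force
      qed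
    qed force
    moreover have "(\<lambda>i. u @ [p g i]) ` {0..<d} = (\<lambda>i. u @ [i]) ` {0..<d}"
    proof -
      have "(\<lambda>i. u @ [p g i]) ` {0..<d} = (\<lambda>i. u @ [i]) ` (p g ` {0..<d})" by (simp add: image_image)
      also have "p g ` {0..<d} = {0..<d}" using bij bij_betw_imp_surj_on by blast
      finally show ?thesis .
    qed
    ultimately show ?thesis unfolding exp1_def image_Un by (simp add: image_image)
  qed
  have injv: "inj_on (\<lambda>(v, g, u). v) ?T"
  proof (rule inj_onI)
    fix a b assume a: "a \<in> ?T" and b: "b \<in> ?T" and ab: "(\<lambda>(v, g, u). v) a = (\<lambda>(v, g, u). v) b"
    obtain va ga ua where an: "a = (va, ga, ua)" by (cases a) auto
    obtain vb gb ub where bn: "b = (vb, gb, ub)" by (cases b) auto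
    have eq: "va = vb" using ab an bn by simp
    have ch: False if "(x, gx, ux) \<in> T - {(v, g, u)}" "x = v @ [i]" for x gx ux i
    proof -
      have "x \<in> vs T" using that by force
      moreover have "pfx v x" using that unfolding pfx_def by blast
      ultimately have "v = x" using ca_antichain[OF cav vv] by blast
      then show False using that by simp
    qed
    show "a = b"
    proof (cases "a \<in> T - {(v, g, u)}")
      case aT: True
      show ?thesis
      proof (cases "b \<in> T - {(v, g, u)}")
        case True
        have "gb = ga \<and> ub = ua" using valid_inj_v[OF val, of va ga ua gb ub] aT True an bn eq by simp
        then show ?thesis using an bn eq by simp
      next
        case False
        then obtain j where "j < d" "b = (v @ [j], s g j, u @ [p g j])" using b unfolding exp1_def by auto
        then show ?thesis using ch[of va ga ua j] aT an bn eq by auto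
      qed
    next
      case False
      then obtain i where i: "i < d" "a = (v @ [i], s g i, u @ [p g i])" using a unfolding exp1_def by auto
      show ?thesis
      proof (cases "b \<in> T - {(v, g, u)}")
        case True then show ?thesis using ch[of vb gb ub i] i an bn eq by auto
      next
        case False
        then obtain j where "j < d" "b = (v @ [j], s g j, u @ [p g j])" using b unfolding exp1_def by auto
        then show ?thesis using i an bn eq by auto
      qed
    qed
  qed
  have inju: "inj_on (\<lambda>(v, g, u). u) ?T"
  proof (rule inj_onI)
    fix a b assume a: "a \<in> ?T" and b: "b \<in> ?T" and ab: "(\<lambda>(v, g, u). u) a = (\<lambda>(v, g, u). u) b"
    obtain va ga ua where an: "a = (va, ga, ua)" by (cases a) auto
    obtain vb gb ub where bn: "b = (vb, gb, ub)" by (cases b) auto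
    have eq: "ua = ub" using ab an bn by simp
    have ch: False if "(vx, gx, x) \<in> T - {(v, g, u)}" "x = u @ [i]" for x gx vx i
    proof -
      have "x \<in> us T" using that by force
      moreover have "pfx u x" using that unfolding pfx_def by blast
      ultimately have "u = x" using ca_antichain[OF cau uu] by blast
      then show False using that by simp
    qed
    show "a = b"
    proof (cases "a \<in> T - {(v, g, u)}")
      case aT: True
      show ?thesis
      proof (cases "b \<in> T - {(v, g, u)}")
        case True
        have "gb = ga \<and> vb = va" using valid_inj_u[OF val, of va ga ua vb gb] aT True an bn eq by simp
        then show ?thesis using an bn eq by simp
      next
        case False
        then obtain j where "j < d" "b = (v @ [j], s g j, u @ [p g j])" using b unfolding exp1_def by auto
        then show ?thesis using ch[of va ga ua "p g j"] aT an bn eq by auto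
      qed
    next
      case False
      then obtain i where i: "i < d" "a = (v @ [i], s g i, u @ [p g i])" using a unfolding exp1_def by auto
      show ?thesis
      proof (cases "b \<in> T - {(v, g, u)}")
        case True then show ?thesis using ch[of vb gb ub "p g i"] i an bn eq by auto
      next
        case False
        then obtain j where j: "j < d" "b = (v @ [j], s g j, u @ [p g j])" using b unfolding exp1_def by auto
        then have "p g i = p g j" using i an bn eq by simp
        then have "i = j" using injp i j inj_on_def by (metis atLeastLessThan_iff zero_le)
        then show ?thesis using i j by simp
      qed
    qed
  qed
  show ?thesis unfolding valid_table_def
    using fin car injv inju vsT usT ca_expand[OF cav vv] ca_expand[OF cau uu] by simp
qed

lemma rel_exp1:
  assumes "WR H d p s" "valid_table H d T" "(v, g, u) \<in> T"
  shows "(T, exp1 d p s v g u T) \<in> table_rel H d p s"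
proof -
  have v2: "valid_table H d (exp1 d p s v g u T)" using valid_exp1[OF assms] .
  have "expand1 d p s T (exp1 d p s v g u T)" unfolding expand1_exp1 using assms(3) by blast
  then have "step H d p s T (exp1 d p s v g u T)" using assms(2) v2 by blast
  then show ?thesis unfolding table_rel_iff using assms(2) v2 by blast
qed




definition Ref :: "nat list set \<Rightarrow> 'a table \<Rightarrow> 'a table" where
  "Ref B X = {t \<in> X. fst t \<in> B}"

definition pl :: "'a table \<Rightarrow> nat list \<Rightarrow> nat" where
  "pl T b = length (THE v. v \<in> vs T \<and> pfx v b)"

definition mu :: "nat list set \<Rightarrow> 'a table \<Rightarrow> nat" where
  "mu B T = (\<Sum>b\<in>B. length b - pl T b)"

lemma the_pfx: assumes ca: "complete_antichain d A" and v: "v \<in> A" "pfx v b"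
  shows "(THE v. v \<in> A \<and> pfx v b) = v"
proof (rule the_equality)
  show "v \<in> A \<and> pfx v b" using v by simp
next
  fix v' assume "v' \<in> A \<and> pfx v' b"
  then show "v' = v" using ca_pfx_unique[OF ca, of v' v b] v by simp
qed

lemma pl_eq: assumes "valid_table H d T" "v \<in> vs T" "pfx v b" shows "pl T b = length v"
  unfolding pl_def using the_pfx[OF valid_ca_vs[OF assms(1)] assms(2,3)] by simp

lemma pfx_len: "pfx v b \<Longrightarrow> length v \<le> length b"
  unfolding pfx_def by auto

lemma vs_exp1: assumes val: "valid_table H d T" and c: "(v, g, u) \<in> T"
  shows "vs (exp1 d p s v g u T) = (vs T - {v}) \<union> (\<lambda>i. v @ [i]) ` {0..<d}"
proof -
  have "vs (T - {(v, g, u)}) = vs T - {v}"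
  proof
    show "vs (T - {(v, g, u)}) \<subseteq> vs T - {v}"
    proof
      fix x assume "x \<in> vs (T - {(v, g, u)})"
      then obtain g' u' where x1: "(x, g', u') \<in> T" and x2: "(x, g', u') \<noteq> (v, g, u)" by auto
      have "x \<noteq> v"
      proof
        assume "x = v"
        then have "g' = g \<and> u' = u" using valid_inj_v[OF val c, of g' u'] x1 by simp
        then show False using x2 \<open>x = v\<close> by simp
      qed
      then show "x \<in> vs T - {v}" using x1 by force
    qed
  qed force
  then show ?thesis unfolding exp1_def image_Un by (simp add: image_image)
qed

lemma mem_vs: "(v, g, u) \<in> T \<Longrightarrow> v \<in> vs T"
  by force

lemma vs_E: assumes "v \<in> vs T" obtains g u where "(v, g, u) \<in> T"
  using assms by force

lemma ca_lists: "complete_antichain d A \<Longrightarrow> a \<in> A \<Longrightarrow> a \<in> lists {0..<d}"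
  unfolding complete_antichain_def by blast

lemma ca_finite: "complete_antichain d A \<Longrightarrow> finite A"
  unfolding complete_antichain_def by blast

lemma ca_ac: "complete_antichain d A \<Longrightarrow> \<forall>u\<in>A. \<forall>v\<in>A. (\<exists>w. v = u @ w) \<longrightarrow> u = v"
  unfolding complete_antichain_def by blast

lemma ca_ex: "complete_antichain d A \<Longrightarrow> \<forall>n. f n < d \<Longrightarrow> \<exists>a. a \<in> A \<and> a = map f [0..<length a]"
  unfolding complete_antichain_def by blast

lemma ext_f: assumes "v \<in> lists {0..<d}" "0 < d"
  shows "\<exists>f. (\<forall>n. f n < d) \<and> v = map f [0..<length v]"
proof -
  define f where "f n = (if n < length v then v ! n else 0)" for n
  have "\<forall>n. f n < d"
  proof
    fix n show "f n < d"
    proof (cases "n < length v")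
      case True
      then have "v ! n \<in> set v" by simp
      then show ?thesis using assms(1) True unfolding f_def by (auto simp: in_lists_conv_set)
    next
      case False then show ?thesis using assms(2) unfolding f_def by simp
    qed
  qed
  moreover have "map f [0..<length v] = v" by (rule nth_equalityI) (simp_all add: f_def)
  ultimately show ?thesis by metis
qed

lemma refine:
  assumes wr: "WR H d p s" and d: "0 < d" and caB: "complete_antichain d B"
  shows "valid_table H d T \<Longrightarrow> (\<forall>b\<in>B. \<exists>v\<in>vs T. pfx v b) \<Longrightarrow> (T, Ref B (R d p s T)) \<in> table_rel H d p s"
proof (induction "mu B T" arbitrary: T rule: less_induct)
  case (less T)
  have val: "valid_table H d T" using less.prems(1) .
  have refs: "\<forall>b\<in>B. \<exists>v\<in>vs T. pfx v b" using less.prems(2) .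
  have cav: "complete_antichain d (vs T)" using valid_ca_vs[OF val] .
  show ?case
  proof (cases "B \<subseteq> vs T")
    case True
    have "vs T \<subseteq> B"
    proof
      fix v assume v: "v \<in> vs T"
      have vl: "v \<in> lists {0..<d}" using ca_lists[OF cav v] .
      obtain f where f: "\<forall>n. f n < d" "v = map f [0..<length v]" using ext_f[OF vl d] by blast
      obtain b where b: "b \<in> B" "b = map f [0..<length b]" using ca_ex[OF caB f(1)] by blast
      have "b \<in> vs T" using b(1) True by blast
      then have "b = v" using antichain_complete_unique[OF ca_ac[OF cav] _ b(2) v f(2)] by blast
      then show "v \<in> B" using b(1) by simp
    qed
    then have BT: "B = vs T" using True by blast
    have "Ref B (R d p s T) = T"
    proof
      show "Ref B (R d p s T) \<subseteq> T"
      proof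
        fix t assume t: "t \<in> Ref B (R d p s T)"
        then have t1: "t \<in> R d p s T" and t2: "fst t \<in> B" unfolding Ref_def by auto
        obtain v g u w where tt: "t = (v @ w, secw s g w, u @ act p s g w)" "(v, g, u) \<in> T" "w \<in> lists {0..<d}"
          by (rule R_E[OF t1])
        have "v @ w \<in> vs T" using t2 tt(1) BT by simp
        moreover have "v \<in> vs T" using tt(2) by (rule mem_vs)
        ultimately have "v = v @ w" using ca_antichain[OF cav, of v "v @ w"] unfolding pfx_def by blast
        then have "w = []" by simp
        then show "t \<in> T" using tt by simp
      qed
    next
      show "T \<subseteq> Ref B (R d p s T)"
      proof
        fix t assume t: "t \<in> T"
        obtain v g u where tt: "t = (v, g, u)" by (cases t) auto
        have "(v @ [], secw s g [], u @ act p s g []) \<in> R d p s T"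
          using R_I[of v g u T "[]" d s p] t tt by simp
        then have "t \<in> R d p s T" using tt by simp
        moreover have "fst t \<in> B" using BT t tt mem_vs by force
        ultimately show "t \<in> Ref B (R d p s T)" unfolding Ref_def by simp
      qed
    qed
    then show ?thesis using rel_refl[OF val] by simp
  next
    case False
    then obtain b where b: "b \<in> B" "b \<notin> vs T" by blast
    obtain v where v: "v \<in> vs T" "pfx v b" using refs b(1) by blast
    obtain g u where c: "(v, g, u) \<in> T" using v(1) by (rule vs_E)
    have vB: "v \<notin> B"
    proof
      assume "v \<in> B"
      then have "v = b" using ca_antichain[OF caB _ b(1) v(2)] by simp
      then show False using v(1) b(2) by simp
    qed
    define T' where "T' = exp1 d p s v g u T"
    have val': "valid_table H d T'" unfolding T'_def using valid_exp1[OF wr val c] .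
    have rel1: "(T, T') \<in> table_rel H d p s" unfolding T'_def using rel_exp1[OF wr val c] .
    have vsT': "vs T' = (vs T - {v}) \<union> (\<lambda>i. v @ [i]) ` {0..<d}" unfolding T'_def using vs_exp1[OF val c] .
    have child: "\<exists>j<d. pfx (v @ [j]) b' \<and> length v < length b'" if bB: "b' \<in> B" and pv: "pfx v b'" for b'
    proof -
      have "b' \<noteq> v" using vB bB by blast
      then obtain r where r: "b' = v @ r" "r \<noteq> []" using pv unfolding pfx_def by auto
      then obtain j r' where jr: "r = j # r'" by (cases r) auto
      have "b' \<in> lists {0..<d}" using ca_lists[OF caB bB] .
      then have "j < d" using r jr by simp
      moreover have "pfx (v @ [j]) b'" using r jr unfolding pfx_def by simp
      ultimately show ?thesis using r jr by auto
    qed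
    have refs': "\<forall>b'\<in>B. \<exists>v'\<in>vs T'. pfx v' b'"
    proof
      fix b' assume b': "b' \<in> B"
      obtain v' where v': "v' \<in> vs T" "pfx v' b'" using refs b' by blast
      show "\<exists>v'\<in>vs T'. pfx v' b'"
      proof (cases "v' = v")
        case False
        then have "v' \<in> vs T'" unfolding vsT' using v'(1) by simp
        then show ?thesis using v'(2) by (rule bexI[rotated])
      next
        case True
        then have pv: "pfx v b'" using v'(2) by simp
        obtain j where j: "j < d" "pfx (v @ [j]) b'" using child[OF b' pv] by blast
        have "v @ [j] \<in> vs T'" unfolding vsT' using j(1) by simp
        then show ?thesis using j(2) by (rule bexI[rotated])
      qed
    qed
    have Ref_eq: "Ref B (R d p s T') = Ref B (R d p s T)"
    proof -
      have s1: "R d p s T' \<subseteq> R d p s T" unfolding T'_def by (rule R_exp1_sub[OF c])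
      have s2: "R d p s T \<subseteq> insert (v, g, u) (R d p s T')" unfolding T'_def by (rule R_exp1_sup[OF c])
      show ?thesis
      proof (rule equalityI)
        show "Ref B (R d p s T') \<subseteq> Ref B (R d p s T)"
        proof
          fix t assume "t \<in> Ref B (R d p s T')"
          then have "t \<in> R d p s T'" "fst t \<in> B" unfolding Ref_def by simp_all
          then show "t \<in> Ref B (R d p s T)" unfolding Ref_def using s1 by auto
        qed
      next
        show "Ref B (R d p s T) \<subseteq> Ref B (R d p s T')"
        proof
          fix t assume "t \<in> Ref B (R d p s T)"
          then have t1: "t \<in> R d p s T" and t2: "fst t \<in> B" unfolding Ref_def by simp_all
          have "t \<noteq> (v, g, u)" using t2 vB by auto
          then have "t \<in> R d p s T'" using s2 t1 by auto
          then show "t \<in> Ref B (R d p s T')" unfolding Ref_def using t2 by simp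
        qed
      qed
    qed
    have pw: "length b' - pl T' b' \<le> length b' - pl T b' \<and> (pfx v b' \<longrightarrow> length b' - pl T' b' < length b' - pl T b')"
      if b': "b' \<in> B" for b'
    proof -
      obtain v' where v': "v' \<in> vs T" "pfx v' b'" using refs b' by blast
      have plT: "pl T b' = length v'" using pl_eq[OF val v'] .
      show ?thesis
      proof (cases "v' = v")
        case False
        then have "v' \<in> vs T'" unfolding vsT' using v'(1) by simp
        then have "pl T' b' = length v'" using pl_eq[OF val' _ v'(2)] by simp
        moreover have "\<not> pfx v b'"
        proof
          assume "pfx v b'"
          then have "v = v'" using ca_pfx_unique[OF cav v(1) v'(1) _ v'(2)] by simp
          then show False using False by simp
        qed
        ultimately show ?thesis using plT by simp
      next
        case True
        then have pv: "pfx v b'" using v'(2) by simp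
        obtain j where j: "j < d" "pfx (v @ [j]) b'" "length v < length b'" using child[OF b' pv] by blast
        have "v @ [j] \<in> vs T'" unfolding vsT' using j(1) by simp
        then have "pl T' b' = length v + 1" using pl_eq[OF val' _ j(2)] by simp
        then show ?thesis using plT True j(3) by (simp, linarith)
      qed
    qed
    have mu_lt: "mu B T' < mu B T"
      unfolding mu_def
    proof (rule sum_strict_mono_ex1)
      show "finite B" using ca_finite[OF caB] .
      show "\<forall>x\<in>B. length x - pl T' x \<le> length x - pl T x" using pw by blast
      show "\<exists>a\<in>B. length a - pl T' a < length a - pl T a" using pw[OF b(1)] v(2) b(1) by blast
    qed
    have "(T', Ref B (R d p s T')) \<in> table_rel H d p s" using less.hyps[OF mu_lt val' refs'] .
    then show ?thesis using rel_trans[OF rel1] Ref_eq by simp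
  qed
qed




definition U :: "nat \<Rightarrow> nat \<Rightarrow> nat list set" where
  "U d N = {x \<in> lists {0..<d}. length x = N}"

lemma ca_U: "complete_antichain d (U d N)"
proof -
  have fin: "finite (U d N)"
  proof -
    have "U d N = {xs. set xs \<subseteq> {0..<d} \<and> length xs = N}" unfolding U_def by (auto simp: in_lists_conv_set)
    then show ?thesis using finite_lists_length_eq[of "{0..<d}" N] by simp
  qed
  have sub: "U d N \<subseteq> lists {0..<d}" unfolding U_def by blast
  have ac: "\<forall>a\<in>U d N. \<forall>b\<in>U d N. (\<exists>w. b = a @ w) \<longrightarrow> a = b"
  proof (intro ballI impI)
    fix a b assume a: "a \<in> U d N" and b: "b \<in> U d N" and "\<exists>w. b = a @ w"
    then obtain w where w: "b = a @ w" by blast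
    have "length a = length b" using a b unfolding U_def by simp
    then show "a = b" using w by simp
  qed
  have cpl: "\<forall>f::nat \<Rightarrow> nat. (\<forall>n. f n < d) \<longrightarrow> (\<exists>!a. a \<in> U d N \<and> a = map f [0..<length a])"
  proof (intro allI impI)
    fix f :: "nat \<Rightarrow> nat" assume f: "\<forall>n. f n < d"
    have m: "map f [0..<N] \<in> U d N" unfolding U_def using f by auto
    show "\<exists>!a. a \<in> U d N \<and> a = map f [0..<length a]"
    proof (rule ex1I[of _ "map f [0..<N]"])
      show "map f [0..<N] \<in> U d N \<and> map f [0..<N] = map f [0..<length (map f [0..<N])]" using m by simp
    next
      fix b assume "b \<in> U d N \<and> b = map f [0..<length b]"
      then show "b = map f [0..<N]" using antichain_complete_unique[OF ac, of b f "map f [0..<N]"] m by simp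
    qed
  qed
  show ?thesis unfolding complete_antichain_def using fin sub ac cpl by blast
qed

lemma bound_len: "finite A \<Longrightarrow> \<exists>N. \<forall>a\<in>A. length a \<le> N"
proof -
  assume "finite A"
  then have "finite (length ` A)" by simp
  then obtain N where "\<forall>n\<in>length ` A. n \<le> N" using finite_nat_set_iff_bounded_le by blast
  then show ?thesis by auto
qed

lemma valid_bound: "valid_table H d T \<Longrightarrow> \<exists>N. \<forall>a\<in>vs T. length a \<le> N"
  using bound_len ca_finite[OF valid_ca_vs] by blast

lemma d0_rel: assumes wr: "WR H d p s" and d: "d = 0" and val: "valid_table H d T"
  shows "(T, {}) \<in> table_rel H d p s"
proof (cases "T = {}")
  case True then show ?thesis using rel_refl[OF val] by simp
next
  case False
  then obtain v g u where c: "(v, g, u) \<in> T" by auto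
  have e: "exp1 d p s v g u T = {}"
  proof -
    have "T \<subseteq> {(v, g, u)}"
    proof
      fix t assume t: "t \<in> T"
      obtain v' g' u' where tt: "t = (v', g', u')" by (cases t) auto
      have "v' \<in> lists {0..<d}" using valid_vs_lists[OF val] t tt by blast
      then have v': "v' = []" using d by (cases v') auto
      have "v \<in> lists {0..<d}" using valid_vs_lists[OF val c] .
      then have v0: "v = []" using d by (cases v) auto
      have "g' = g \<and> u' = u" using valid_inj_v[OF val c, of g' u'] t tt v' v0 by simp
      then show "t \<in> {(v, g, u)}" using tt v' v0 by simp
    qed
    then show ?thesis unfolding exp1_def using d by auto
  qed
  show ?thesis using rel_exp1[OF wr val c] e by simp
qed

lemma ev_imp_rel:
  assumes wr: "WR H d p s" and val: "valid_table H d T" and val': "valid_table H d T'"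
    and ev: "eq_ev d p s T T'"
  shows "(T, T') \<in> table_rel H d p s"
proof (cases "d = 0")
  case True
  have "(T, {}) \<in> table_rel H d p s" using d0_rel[OF wr True val] .
  moreover have "({}, T') \<in> table_rel H d p s" using rel_sym[OF d0_rel[OF wr True val']] .
  ultimately show ?thesis by (rule rel_trans)
next
  case False
  then have d: "0 < d" by simp
  obtain M where M: "agree_from M (R d p s T) (R d p s T')" using ev unfolding eq_ev_def by blast
  obtain N1 where N1: "\<forall>a\<in>vs T. length a \<le> N1" using valid_bound[OF val] by blast
  obtain N2 where N2: "\<forall>a\<in>vs T'. length a \<le> N2" using valid_bound[OF val'] by blast
  define N where "N = Suc (max M (max N1 N2))"
  have ca: "complete_antichain d (U d N)" by (rule ca_U)
  have refs: "\<forall>b\<in>U d N. \<exists>v\<in>vs X. pfx v b" if valX: "valid_table H d X" and NX: "\<forall>a\<in>vs X. length a \<le> N" for X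
  proof
    fix b assume b: "b \<in> U d N"
    have bl: "b \<in> lists {0..<d}" and lb: "length b = N" using b unfolding U_def by auto
    have "b \<noteq> []" using lb unfolding N_def by auto
    moreover have "\<forall>a\<in>vs X. length a \<le> length b" using NX lb by simp
    ultimately show "\<exists>v\<in>vs X. pfx v b" using ca_P2[OF valid_ca_vs[OF valX] bl] by blast
  qed
  have r1: "(T, Ref (U d N) (R d p s T)) \<in> table_rel H d p s"
    using refine[OF wr d ca val refs[OF val]] N1 unfolding N_def by force
  have r2: "(T', Ref (U d N) (R d p s T')) \<in> table_rel H d p s"
    using refine[OF wr d ca val' refs[OF val']] N2 unfolding N_def by force
  have eq: "Ref (U d N) (R d p s T) = Ref (U d N) (R d p s T')"
  proof -
    have "\<forall>t. fst t \<in> U d N \<longrightarrow> (t \<in> R d p s T \<longleftrightarrow> t \<in> R d p s T')"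
    proof (intro allI impI)
      fix t :: "nat list \<times> 'a \<times> nat list" assume "fst t \<in> U d N"
      then have "M \<le> length (fst t)" unfolding U_def N_def by auto
      then show "t \<in> R d p s T \<longleftrightarrow> t \<in> R d p s T'" using M unfolding agree_from_def
        by (cases t) simp
    qed
    then show ?thesis unfolding Ref_def by blast
  qed
  show ?thesis using rel_trans[OF r1 rel_sym[OF r2[unfolded eq[symmetric]]]] .
qed

lemma rel_char: "WR H d p s \<Longrightarrow> (T, T') \<in> table_rel H d p s \<longleftrightarrow>
   valid_table H d T \<and> valid_table H d T' \<and> eq_ev d p s T T'"
  using ev_imp_rel rel_imp_eq_ev rel_valid by metis




lemma compose_I: "(w, g, u) \<in> T1 \<Longrightarrow> (v, h, w) \<in> T2 \<Longrightarrow> (v, g \<otimes>\<^bsub>H\<^esub> h, u) \<in> compose_tables H T1 T2"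
  unfolding compose_tables_def by blast

lemma compose_E: assumes "t \<in> compose_tables H T1 T2"
  obtains v g h u w where "t = (v, g \<otimes>\<^bsub>H\<^esub> h, u)" "(w, g, u) \<in> T1" "(v, h, w) \<in> T2"
  using assms unfolding compose_tables_def by blast

lemma valid_compose:
  assumes wr: "WR H d p s" and v1: "valid_table H d T1" and v2: "valid_table H d T2"
    and m: "vs T1 = us T2"
  shows "valid_table H d (compose_tables H T1 T2) \<and> vs (compose_tables H T1 T2) = vs T2 \<and>
         us (compose_tables H T1 T2) = us T1"
proof -
  let ?C = "compose_tables H T1 T2"
  have fin: "finite ?C"
  proof (rule finite_subset)
    show "?C \<subseteq> (\<lambda>((w, g, u), (v, h, w')). (v, g \<otimes>\<^bsub>H\<^esub> h, u)) ` (T1 \<times> T2)"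
    proof
      fix t assume "t \<in> ?C"
      then obtain v g h u w where t: "t = (v, g \<otimes>\<^bsub>H\<^esub> h, u)" "(w, g, u) \<in> T1" "(v, h, w) \<in> T2"
        by (rule compose_E)
      then have mem: "((w, g, u), (v, h, w)) \<in> T1 \<times> T2" by simp
      show "t \<in> (\<lambda>((w, g, u), (v, h, w')). (v, g \<otimes>\<^bsub>H\<^esub> h, u)) ` (T1 \<times> T2)"
        by (rule rev_image_eqI[OF mem]) (simp add: t(1))
    qed
    show "finite ((\<lambda>((w, g, u), (v, h, w')). (v, g \<otimes>\<^bsub>H\<^esub> h, u)) ` (T1 \<times> T2))"
      using valid_finite[OF v1] valid_finite[OF v2] by simp
  qed
  have car: "\<forall>(v, k, u)\<in>?C. k \<in> carrier H"
  proof
    fix t assume "t \<in> ?C"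
    then obtain v g h u w where t: "t = (v, g \<otimes>\<^bsub>H\<^esub> h, u)" "(w, g, u) \<in> T1" "(v, h, w) \<in> T2"
      by (rule compose_E)
    have "g \<otimes>\<^bsub>H\<^esub> h \<in> carrier H" using WR_m[OF wr valid_carrier[OF v1 t(2)] valid_carrier[OF v2 t(3)]] .
    then show "case t of (v, k, u) \<Rightarrow> k \<in> carrier H" using t(1) by simp
  qed
  have injv: "inj_on (\<lambda>(v, g, u). v) ?C"
  proof (rule inj_onI)
    fix a b assume a: "a \<in> ?C" and b: "b \<in> ?C" and ab: "(\<lambda>(v, g, u). v) a = (\<lambda>(v, g, u). v) b"
    obtain v g h u w where ta: "a = (v, g \<otimes>\<^bsub>H\<^esub> h, u)" "(w, g, u) \<in> T1" "(v, h, w) \<in> T2"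
      using a by (rule compose_E)
    obtain v' g' h' u' w' where tb: "b = (v', g' \<otimes>\<^bsub>H\<^esub> h', u')" "(w', g', u') \<in> T1" "(v', h', w') \<in> T2"
      using b by (rule compose_E)
    have vv: "v' = v" using ab ta tb by simp
    have "h' = h \<and> w' = w" using valid_inj_v[OF v2 ta(3), of h' w'] tb(3) vv by simp
    then have "g' = g \<and> u' = u" using valid_inj_v[OF v1 ta(2), of g' u'] tb(2) by simp
    then show "a = b" using ta tb vv \<open>h' = h \<and> w' = w\<close> by simp
  qed
  have inju: "inj_on (\<lambda>(v, g, u). u) ?C"
  proof (rule inj_onI)
    fix a b assume a: "a \<in> ?C" and b: "b \<in> ?C" and ab: "(\<lambda>(v, g, u). u) a = (\<lambda>(v, g, u). u) b"
    obtain v g h u w where ta: "a = (v, g \<otimes>\<^bsub>H\<^esub> h, u)" "(w, g, u) \<in> T1" "(v, h, w) \<in> T2"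
      using a by (rule compose_E)
    obtain v' g' h' u' w' where tb: "b = (v', g' \<otimes>\<^bsub>H\<^esub> h', u')" "(w', g', u') \<in> T1" "(v', h', w') \<in> T2"
      using b by (rule compose_E)
    have uu: "u' = u" using ab ta tb by simp
    have "g' = g \<and> w' = w" using valid_inj_u[OF v1 ta(2), of w' g'] tb(2) uu by simp
    then have "h' = h \<and> v' = v" using valid_inj_u[OF v2 ta(3), of v' h'] tb(3) by simp
    then show "a = b" using ta tb uu \<open>g' = g \<and> w' = w\<close> by simp
  qed
  have vsC: "vs ?C = vs T2"
  proof
    show "vs ?C \<subseteq> vs T2"
    proof
      fix x assume "x \<in> vs ?C"
      then obtain t where t: "t \<in> ?C" "x = (\<lambda>(v, g, u). v) t" by blast
      obtain v g h u w where ta: "t = (v, g \<otimes>\<^bsub>H\<^esub> h, u)" "(w, g, u) \<in> T1" "(v, h, w) \<in> T2"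
        using t(1) by (rule compose_E)
      show "x \<in> vs T2" using t(2) ta(1) mem_vs[OF ta(3)] by simp
    qed
  next
    show "vs T2 \<subseteq> vs ?C"
    proof
      fix x assume "x \<in> vs T2"
      then obtain h w where c2: "(x, h, w) \<in> T2" by (rule vs_E)
      have "w \<in> us T2" using c2 by force
      then have "w \<in> vs T1" using m by simp
      then obtain g u where c1: "(w, g, u) \<in> T1" by (rule vs_E)
      show "x \<in> vs ?C" using mem_vs[OF compose_I[OF c1 c2]] .
    qed
  qed
  have usC: "us ?C = us T1"
  proof
    show "us ?C \<subseteq> us T1"
    proof
      fix x assume "x \<in> us ?C"
      then obtain t where t: "t \<in> ?C" "x = (\<lambda>(v, g, u). u) t" by blast
      obtain v g h u w where ta: "t = (v, g \<otimes>\<^bsub>H\<^esub> h, u)" "(w, g, u) \<in> T1" "(v, h, w) \<in> T2"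
        using t(1) by (rule compose_E)
      have "u \<in> us T1" using ta(2) by force
      then show "x \<in> us T1" using t(2) ta(1) by simp
    qed
  next
    show "us T1 \<subseteq> us ?C"
    proof
      fix x assume "x \<in> us T1"
      then obtain w g where c1: "(w, g, x) \<in> T1" by force
      have "w \<in> us T2" using c1 m by force
      then obtain v h where c2: "(v, h, w) \<in> T2" by force
      have "(v, g \<otimes>\<^bsub>H\<^esub> h, x) \<in> ?C" using compose_I[OF c1 c2] .
      then show "x \<in> us ?C" by force
    qed
  qed
  show ?thesis unfolding valid_table_def
    using fin car injv inju vsC usC valid_ca_vs[OF v2] valid_ca_us[OF v1] by simp
qed

lemma R_compose_sub:
  assumes wr: "WR H d p s" and v1: "valid_table H d T1" and v2: "valid_table H d T2"
    and t: "(x, k, z) \<in> R d p s (compose_tables H T1 T2)"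
  shows "\<exists>h y g. (x, h, y) \<in> R d p s T2 \<and> (y, g, z) \<in> R d p s T1 \<and> k = g \<otimes>\<^bsub>H\<^esub> h"
proof -
  obtain v k0 u w where tt: "(x, k, z) = (v @ w, secw s k0 w, u @ act p s k0 w)"
     "(v, k0, u) \<in> compose_tables H T1 T2" "w \<in> lists {0..<d}"
    by (rule R_E[OF t])
  obtain v' g0 h0 u' w0 where cc: "(v, k0, u) = (v', g0 \<otimes>\<^bsub>H\<^esub> h0, u')" "(w0, g0, u') \<in> T1" "(v', h0, w0) \<in> T2"
    using tt(2) by (rule compose_E)
  have gc: "g0 \<in> carrier H" using valid_carrier[OF v1 cc(2)] .
  have hc: "h0 \<in> carrier H" using valid_carrier[OF v2 cc(3)] .
  have am: "act p s (g0 \<otimes>\<^bsub>H\<^esub> h0) w = act p s g0 (act p s h0 w) \<and>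
   secw s (g0 \<otimes>\<^bsub>H\<^esub> h0) w = secw s g0 (act p s h0 w) \<otimes>\<^bsub>H\<^esub> secw s h0 w"
    using act_mult[OF wr gc hc tt(3)] .
  have r2: "(v @ w, secw s h0 w, w0 @ act p s h0 w) \<in> R d p s T2"
    using R_I[OF cc(3) tt(3)] cc(1) by simp
  have al: "act p s h0 w \<in> lists {0..<d}" using act_lists[OF wr hc tt(3)] .
  have r1: "(w0 @ act p s h0 w, secw s g0 (act p s h0 w), u @ act p s g0 (act p s h0 w)) \<in> R d p s T1"
    using R_I[OF cc(2) al] cc(1) by simp
  have "x = v @ w" "z = u @ act p s g0 (act p s h0 w)" "k = secw s g0 (act p s h0 w) \<otimes>\<^bsub>H\<^esub> secw s h0 w"
    using tt(1) cc(1) am by auto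
  then show ?thesis using r1 r2 by blast
qed

lemma R_compose_sup:
  assumes wr: "WR H d p s" and v1: "valid_table H d T1" and v2: "valid_table H d T2"
    and m: "vs T1 = us T2"
    and r2: "(x, h, y) \<in> R d p s T2" and r1: "(y, g, z) \<in> R d p s T1"
  shows "(x, g \<otimes>\<^bsub>H\<^esub> h, z) \<in> R d p s (compose_tables H T1 T2)"
proof -
  obtain v h0 w0 w where a2: "(x, h, y) = (v @ w, secw s h0 w, w0 @ act p s h0 w)" "(v, h0, w0) \<in> T2" "w \<in> lists {0..<d}"
    by (rule R_E[OF r2])
  obtain v1 g0 u w1 where a1: "(y, g, z) = (v1 @ w1, secw s g0 w1, u @ act p s g0 w1)" "(v1, g0, u) \<in> T1" "w1 \<in> lists {0..<d}"
    by (rule R_E[OF r1])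
  have "w0 \<in> vs T1" using a2(2) m by force
  moreover have "v1 \<in> vs T1" using a1(2) by (rule mem_vs)
  moreover have "pfx w0 y" using a2(1) unfolding pfx_def by auto
  moreover have "pfx v1 y" using a1(1) unfolding pfx_def by auto
  ultimately have eqw: "v1 = w0" using ca_pfx_unique[OF valid_ca_vs[OF v1]] by blast
  then have w1: "w1 = act p s h0 w" using a1(1) a2(1) by simp
  have gc: "g0 \<in> carrier H" using valid_carrier[OF v1 a1(2)] .
  have hc: "h0 \<in> carrier H" using valid_carrier[OF v2 a2(2)] .
  have am: "act p s (g0 \<otimes>\<^bsub>H\<^esub> h0) w = act p s g0 (act p s h0 w) \<and>
   secw s (g0 \<otimes>\<^bsub>H\<^esub> h0) w = secw s g0 (act p s h0 w) \<otimes>\<^bsub>H\<^esub> secw s h0 w"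
    using act_mult[OF wr gc hc a2(3)] .
  have c: "(v, g0 \<otimes>\<^bsub>H\<^esub> h0, u) \<in> compose_tables H T1 T2"
    using compose_I[OF _ a2(2)] a1(2) eqw by simp
  have "(v @ w, secw s (g0 \<otimes>\<^bsub>H\<^esub> h0) w, u @ act p s (g0 \<otimes>\<^bsub>H\<^esub> h0) w) \<in> R d p s (compose_tables H T1 T2)"
    using R_I[OF c a2(3)] .
  then show ?thesis using am a1(1) a2(1) w1 by simp
qed

lemma R_len: assumes "(x, h, y) \<in> R d p s T" "\<forall>a\<in>vs T. length a \<le> L"
  shows "length x \<le> length y + L"
proof -
  obtain v g u w where a: "(x, h, y) = (v @ w, secw s g w, u @ act p s g w)" "(v, g, u) \<in> T" "w \<in> lists {0..<d}"
    by (rule R_E[OF assms(1)])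
  have "length v \<le> L" using assms(2) mem_vs[OF a(2)] by blast
  then show ?thesis using a(1) by auto
qed

lemma compose_agree_dir:
  assumes wr: "WR H d p s"
    and v1: "valid_table H d T1" and v2: "valid_table H d T2" and m: "vs T1 = us T2"
    and v1': "valid_table H d T1'" and v2': "valid_table H d T2'" and m': "vs T1' = us T2'"
    and a1: "agree_from M1 (R d p s T1) (R d p s T1')"
    and a2: "agree_from M2 (R d p s T2) (R d p s T2')"
    and L: "\<forall>a\<in>vs T2. length a \<le> L"
    and t: "(x, k, z) \<in> R d p s (compose_tables H T1 T2)" and lx: "M2 + M1 + L \<le> length x"
  shows "(x, k, z) \<in> R d p s (compose_tables H T1' T2')"
proof -
  obtain h y g where hyg: "(x, h, y) \<in> R d p s T2" "(y, g, z) \<in> R d p s T1" "k = g \<otimes>\<^bsub>H\<^esub> h"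
    using R_compose_sub[OF wr v1 v2 t] by blast
  have "(x, h, y) \<in> R d p s T2'" using a2 hyg(1) lx unfolding agree_from_def by auto
  moreover have "length x \<le> length y + L" using R_len[OF hyg(1) L] .
  then have "M1 \<le> length y" using lx by simp
  then have "(y, g, z) \<in> R d p s T1'" using a1 hyg(2) unfolding agree_from_def by auto
  ultimately show ?thesis using R_compose_sup[OF wr v1' v2' m'] hyg(3) by blast
qed

lemma rel_compose:
  assumes wr: "WR H d p s"
    and r1: "(T1, T1') \<in> table_rel H d p s" and r2: "(T2, T2') \<in> table_rel H d p s"
    and m: "vs T1 = us T2" and m': "vs T1' = us T2'"
  shows "(compose_tables H T1 T2, compose_tables H T1' T2') \<in> table_rel H d p s"
proof -
  have v1: "valid_table H d T1" and v1': "valid_table H d T1'" and e1: "eq_ev d p s T1 T1'"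
    using r1 rel_char[OF wr] by blast+
  have v2: "valid_table H d T2" and v2': "valid_table H d T2'" and e2: "eq_ev d p s T2 T2'"
    using r2 rel_char[OF wr] by blast+
  obtain M1 where a1: "agree_from M1 (R d p s T1) (R d p s T1')" using e1 unfolding eq_ev_def by blast
  obtain M2 where a2: "agree_from M2 (R d p s T2) (R d p s T2')" using e2 unfolding eq_ev_def by blast
  obtain L where L: "\<forall>a\<in>vs T2. length a \<le> L" using valid_bound[OF v2] by blast
  obtain L' where L': "\<forall>a\<in>vs T2'. length a \<le> L'" using valid_bound[OF v2'] by blast
  have vc: "valid_table H d (compose_tables H T1 T2)" using valid_compose[OF wr v1 v2 m] by blast
  have vc': "valid_table H d (compose_tables H T1' T2')" using valid_compose[OF wr v1' v2' m'] by blast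
  have "agree_from (M2 + M1 + L + L') (R d p s (compose_tables H T1 T2)) (R d p s (compose_tables H T1' T2'))"
    unfolding agree_from_def
  proof (intro allI impI iffI)
    fix x k z assume lx: "M2 + M1 + L + L' \<le> length x" and t: "(x, k, z) \<in> R d p s (compose_tables H T1 T2)"
    show "(x, k, z) \<in> R d p s (compose_tables H T1' T2')"
      using compose_agree_dir[OF wr v1 v2 m v1' v2' m' a1 a2 L t] lx by simp
  next
    fix x k z assume lx: "M2 + M1 + L + L' \<le> length x" and t: "(x, k, z) \<in> R d p s (compose_tables H T1' T2')"
    show "(x, k, z) \<in> R d p s (compose_tables H T1 T2)"
      using compose_agree_dir[OF wr v1' v2' m' v1 v2 m agree_sym[OF a1] agree_sym[OF a2] L' t] lx by simp
  qed
  then have "eq_ev d p s (compose_tables H T1 T2) (compose_tables H T1' T2')" unfolding eq_ev_def by blast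
  then show ?thesis using rel_char[OF wr] vc vc' by blast
qed




lemma match_exists:
  assumes wr: "WR H d p s" and v1: "valid_table H d T1" and v2: "valid_table H d T2"
  shows "\<exists>S1 S2. (T1, S1) \<in> table_rel H d p s \<and> (T2, S2) \<in> table_rel H d p s \<and> vs S1 = us S2"
proof (cases "d = 0")
  case True
  have "(T1, {}) \<in> table_rel H d p s" "(T2, {}) \<in> table_rel H d p s"
    using d0_rel[OF wr True v1] d0_rel[OF wr True v2] by auto
  then show ?thesis by force
next
  case False
  then have d: "0 < d" by simp
  obtain N1 where N1: "\<forall>a\<in>vs T1. length a \<le> N1" using valid_bound[OF v1] by blast
  obtain L where L: "\<forall>a\<in>vs T2. length a \<le> L" using valid_bound[OF v2] by blast
  define K where "K = Suc (N1 + L)"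
  have ca: "complete_antichain d (U d K)" by (rule ca_U)
  have refs2: "\<forall>b\<in>U d K. \<exists>v\<in>vs T2. pfx v b"
  proof
    fix b assume b: "b \<in> U d K"
    have bl: "b \<in> lists {0..<d}" and lb: "length b = K" using b unfolding U_def by auto
    have "b \<noteq> []" using lb unfolding K_def by auto
    moreover have "\<forall>a\<in>vs T2. length a \<le> length b" using L lb unfolding K_def by force
    ultimately show "\<exists>v\<in>vs T2. pfx v b" using ca_P2[OF valid_ca_vs[OF v2] bl] by blast
  qed
  define S2 where "S2 = Ref (U d K) (R d p s T2)"
  have rel2: "(T2, S2) \<in> table_rel H d p s" unfolding S2_def using refine[OF wr d ca v2 refs2] .
  have vS2: "valid_table H d S2" using rel_valid[OF rel2] by blast
  have caU2: "complete_antichain d (us S2)" using valid_ca_us[OF vS2] .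
  have long: "N1 < length u" if u: "u \<in> us S2" for u
  proof -
    obtain x k where xk: "(x, k, u) \<in> S2" using u by force
    then have "(x, k, u) \<in> R d p s T2" "x \<in> U d K" unfolding S2_def Ref_def by auto
    then have "length x \<le> length u + L" "length x = K" using R_len[OF _ L] unfolding U_def by auto
    then show ?thesis unfolding K_def by simp
  qed
  have refs1: "\<forall>b\<in>us S2. \<exists>v\<in>vs T1. pfx v b"
  proof
    fix b assume b: "b \<in> us S2"
    have bl: "b \<in> lists {0..<d}" using ca_lists[OF caU2 b] .
    have lb: "N1 < length b" using long[OF b] .
    have "b \<noteq> []" using lb by auto
    moreover have "\<forall>a\<in>vs T1. length a \<le> length b" using N1 lb by force
    ultimately show "\<exists>v\<in>vs T1. pfx v b" using ca_P2[OF valid_ca_vs[OF v1] bl] by blast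
  qed
  define S1 where "S1 = Ref (us S2) (R d p s T1)"
  have rel1: "(T1, S1) \<in> table_rel H d p s" unfolding S1_def using refine[OF wr d caU2 v1 refs1] .
  have "vs S1 = us S2"
  proof
    show "vs S1 \<subseteq> us S2"
    proof
      fix x assume "x \<in> vs S1"
      then obtain k z where "(x, k, z) \<in> S1" by (rule vs_E)
      then show "x \<in> us S2" unfolding S1_def Ref_def by simp
    qed
  next
    show "us S2 \<subseteq> vs S1"
    proof
      fix b assume b: "b \<in> us S2"
      obtain v where v: "v \<in> vs T1" "pfx v b" using refs1 b by blast
      obtain g u where c: "(v, g, u) \<in> T1" using v(1) by (rule vs_E)
      obtain w where w: "b = v @ w" using v(2) unfolding pfx_def by blast
      have "b \<in> lists {0..<d}" using ca_lists[OF caU2 b] .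
      then have wl: "w \<in> lists {0..<d}" using w by simp
      have "(v @ w, secw s g w, u @ act p s g w) \<in> R d p s T1" using R_I[OF c wl] .
      then have "(b, secw s g w, u @ act p s g w) \<in> S1" unfolding S1_def Ref_def using w b by simp
      then show "b \<in> vs S1" by (rule mem_vs)
    qed
  qed
  then show ?thesis using rel1 rel2 by blast
qed

abbreviation cls where "cls H d p s T \<equiv> table_rel H d p s `` {T}"

lemma carrier_V: "A \<in> carrier (V_group H d p s) \<longleftrightarrow> (\<exists>T. valid_table H d T \<and> A = cls H d p s T)"
  unfolding V_group_def quotient_def by auto

lemma mem_cls: "X \<in> cls H d p s T \<longleftrightarrow> (T, X) \<in> table_rel H d p s"
  by simp

lemma cls_eq: assumes "(T, T') \<in> table_rel H d p s" shows "cls H d p s T = cls H d p s T'"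
proof
  show "cls H d p s T \<subseteq> cls H d p s T'"
    using rel_trans[OF rel_sym[OF assms]] by auto
  show "cls H d p s T' \<subseteq> cls H d p s T"
    using rel_trans[OF assms] by auto
qed

lemma cls_eq_iff: assumes "valid_table H d T'"
  shows "cls H d p s T = cls H d p s T' \<longleftrightarrow> (T, T') \<in> table_rel H d p s"
proof
  assume e: "cls H d p s T = cls H d p s T'"
  have "T' \<in> cls H d p s T'" using rel_refl[OF assms] by simp
  then have "T' \<in> cls H d p s T" using e by simp
  then show "(T, T') \<in> table_rel H d p s" by simp
qed (rule cls_eq)

lemma V_mult:
  assumes wr: "WR H d p s"
    and r1: "(T1, S1) \<in> table_rel H d p s" and r2: "(T2, S2) \<in> table_rel H d p s" and m: "vs S1 = us S2"
  shows "cls H d p s T1 \<otimes>\<^bsub>V_group H d p s\<^esub> cls H d p s T2 = cls H d p s (compose_tables H S1 S2)"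
proof -
  let ?P = "\<lambda>C. \<exists>X1\<in>cls H d p s T1. \<exists>X2\<in>cls H d p s T2.
          (\<lambda>(v, g, u). v) ` X1 = (\<lambda>(v, g, u). u) ` X2 \<and>
          C = table_rel H d p s `` {compose_tables H X1 X2}"
  have ex: "?P (cls H d p s (compose_tables H S1 S2))"
  proof (rule bexI[of _ S1])
    show "S1 \<in> cls H d p s T1" using r1 by simp
    show "\<exists>X2\<in>cls H d p s T2. vs S1 = us X2 \<and> cls H d p s (compose_tables H S1 S2) = cls H d p s (compose_tables H S1 X2)"
    proof (rule bexI[of _ S2])
      show "S2 \<in> cls H d p s T2" using r2 by simp
    qed (simp add: m)
  qed
  have eq: "cls H d p s T1 \<otimes>\<^bsub>V_group H d p s\<^esub> cls H d p s T2 = (SOME C. ?P C)"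
    unfolding V_group_def by simp
  have "?P (SOME C. ?P C)" using someI[of ?P, OF ex] .
  then obtain X1 X2 where x0: "X1 \<in> cls H d p s T1" "X2 \<in> cls H d p s T2"
     "vs X1 = us X2" "(SOME C. ?P C) = cls H d p s (compose_tables H X1 X2)" by blast
  then have x: "(T1, X1) \<in> table_rel H d p s" "(T2, X2) \<in> table_rel H d p s"
     "vs X1 = us X2" "(SOME C. ?P C) = cls H d p s (compose_tables H X1 X2)" by simp_all
  have "(S1, X1) \<in> table_rel H d p s" using rel_trans[OF rel_sym[OF r1] x(1)] .
  moreover have "(S2, X2) \<in> table_rel H d p s" using rel_trans[OF rel_sym[OF r2] x(2)] .
  ultimately have "(compose_tables H S1 S2, compose_tables H X1 X2) \<in> table_rel H d p s"
    using rel_compose[OF wr _ _ m x(3)] by blast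
  then have "cls H d p s (compose_tables H S1 S2) = cls H d p s (compose_tables H X1 X2)" by (rule cls_eq)
  then show ?thesis using eq x(4) by simp
qed




lemma WR_G: assumes grp: "group G" and wr: "wreath_recursion G d perm sec"
  shows "WR G d perm sec"
proof -
  interpret G: group G by (rule grp)
  show ?thesis using wr unfolding WR_def wreath_recursion_def by (simp add: G.m_closed)
qed

lemma perm_one: assumes grp: "group G" and wr: "wreath_recursion G d perm sec" and i: "i < d"
  shows "perm \<one>\<^bsub>G\<^esub> i = i"
proof -
  interpret G: group G by (rule grp)
  have W: "WR G d perm sec" using WR_G[OF grp wr] .
  have o: "\<one>\<^bsub>G\<^esub> \<in> carrier G" by simp
  have "perm \<one>\<^bsub>G\<^esub> i = perm (\<one>\<^bsub>G\<^esub> \<otimes>\<^bsub>G\<^esub> \<one>\<^bsub>G\<^esub>) i" by simp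
  also have "\<dots> = perm \<one>\<^bsub>G\<^esub> (perm \<one>\<^bsub>G\<^esub> i)" using WR_pm[OF W o o i] .
  finally have e: "perm \<one>\<^bsub>G\<^esub> (perm \<one>\<^bsub>G\<^esub> i) = perm \<one>\<^bsub>G\<^esub> i" by simp
  have inj: "inj_on (perm \<one>\<^bsub>G\<^esub>) {0..<d}" using WR_bij[OF W o] bij_betw_def by blast
  have "perm \<one>\<^bsub>G\<^esub> i < d" using WR_p[OF W o i] .
  then show ?thesis using inj_onD[OF inj e] i by simp
qed

lemma sec_one: assumes grp: "group G" and wr: "wreath_recursion G d perm sec" and i: "i < d"
  shows "sec \<one>\<^bsub>G\<^esub> i = \<one>\<^bsub>G\<^esub>"
proof -
  interpret G: group G by (rule grp)
  have W: "WR G d perm sec" using WR_G[OF grp wr] .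
  have o: "\<one>\<^bsub>G\<^esub> \<in> carrier G" by simp
  have xc: "sec \<one>\<^bsub>G\<^esub> i \<in> carrier G" using WR_s[OF W o i] .
  have "sec \<one>\<^bsub>G\<^esub> i = sec (\<one>\<^bsub>G\<^esub> \<otimes>\<^bsub>G\<^esub> \<one>\<^bsub>G\<^esub>) i" by simp
  also have "\<dots> = sec \<one>\<^bsub>G\<^esub> (perm \<one>\<^bsub>G\<^esub> i) \<otimes>\<^bsub>G\<^esub> sec \<one>\<^bsub>G\<^esub> i" using WR_sm[OF W o o i] .
  also have "\<dots> = sec \<one>\<^bsub>G\<^esub> i \<otimes>\<^bsub>G\<^esub> sec \<one>\<^bsub>G\<^esub> i" using perm_one[OF grp wr i] by simp
  finally have "sec \<one>\<^bsub>G\<^esub> i \<otimes>\<^bsub>G\<^esub> \<one>\<^bsub>G\<^esub> = sec \<one>\<^bsub>G\<^esub> i \<otimes>\<^bsub>G\<^esub> sec \<one>\<^bsub>G\<^esub> i"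
    using xc by simp
  then have "sec \<one>\<^bsub>G\<^esub> i \<otimes>\<^bsub>G\<^esub> sec \<one>\<^bsub>G\<^esub> i = sec \<one>\<^bsub>G\<^esub> i" using xc by simp
  then show ?thesis using G.l_cancel_one[OF xc xc] by simp
qed

lemma act_one: assumes grp: "group G" and wr: "wreath_recursion G d perm sec" and w: "w \<in> lists {0..<d}"
  shows "act perm sec \<one>\<^bsub>G\<^esub> w = w \<and> secw sec \<one>\<^bsub>G\<^esub> w = \<one>\<^bsub>G\<^esub>"
  using w
proof (induction w)
  case Nil then show ?case by simp
next
  case (Cons x w)
  then have "x < d" "w \<in> lists {0..<d}" by auto
  then show ?case using Cons.IH perm_one[OF grp wr] sec_one[OF grp wr] by simp
qed

lemma Kset_step: assumes grp: "group G" and wr: "wreath_recursion G d perm sec"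
  shows "Kset G d perm sec n \<subseteq> Kset G d perm sec (Suc n)"
proof
  fix g assume g: "g \<in> Kset G d perm sec n"
  then have gc: "g \<in> carrier G" and K: "\<forall>v\<in>lists {0..<d}. length v = n \<longrightarrow>
       act perm sec g v = v \<and> secw sec g v = \<one>\<^bsub>G\<^esub>" unfolding Kset_def by auto
  have "\<forall>v\<in>lists {0..<d}. length v = Suc n \<longrightarrow> act perm sec g v = v \<and> secw sec g v = \<one>\<^bsub>G\<^esub>"
  proof (intro ballI impI)
    fix v assume v: "v \<in> lists {0..<d}" and l: "length v = Suc n"
    then obtain v' x where vx: "v = v' @ [x]" by (metis append_butlast_last_id length_0_conv nat.distinct(1))
    have v': "v' \<in> lists {0..<d}" and x: "x < d" using v vx by auto
    have lv': "length v' = n" using l vx by simp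
    have k: "act perm sec g v' = v'" "secw sec g v' = \<one>\<^bsub>G\<^esub>" using K v' lv' by auto
    have xl: "[x] \<in> lists {0..<d}" using x by simp
    show "act perm sec g v = v \<and> secw sec g v = \<one>\<^bsub>G\<^esub>"
      using act_one[OF grp wr xl] k unfolding vx act_append secw_append by simp
  qed
  then show "g \<in> Kset G d perm sec (Suc n)" unfolding Kset_def using gc by simp
qed

lemma Kset_mono: assumes grp: "group G" and wr: "wreath_recursion G d perm sec" and nm: "n \<le> m"
  shows "Kset G d perm sec n \<subseteq> Kset G d perm sec m"
  using nm
proof (induction m)
  case 0 then show ?case by simp
next
  case (Suc m)
  show ?case
  proof (cases "n = Suc m")
    case True then show ?thesis by simp
  next
    case False
    then have "n \<le> m" using Suc.prems by simp
    then show ?thesis using Suc.IH Kset_step[OF grp wr, of m] by blast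
  qed
qed

lemma actbar_app: "w \<in> lists {0..<d} \<Longrightarrow> actbar d perm sec g w = act perm sec g w"
  unfolding actbar_def by simp

lemma actbar_mult: assumes W: "WR G d perm sec" and g: "g \<in> carrier G" and h: "h \<in> carrier G"
  shows "actbar d perm sec g \<otimes>\<^bsub>Gbar G d perm sec\<^esub> actbar d perm sec h = actbar d perm sec (g \<otimes>\<^bsub>G\<^esub> h)"
proof -
  have "restrict (actbar d perm sec g \<circ> actbar d perm sec h) (lists {0..<d}) = actbar d perm sec (g \<otimes>\<^bsub>G\<^esub> h)"
  proof (rule ext)
    fix w show "restrict (actbar d perm sec g \<circ> actbar d perm sec h) (lists {0..<d}) w = actbar d perm sec (g \<otimes>\<^bsub>G\<^esub> h) w"
    proof (cases "w \<in> lists {0..<d}")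
      case True
      have "act perm sec h w \<in> lists {0..<d}" using act_lists[OF W h True] .
      then show ?thesis using True act_mult[OF W g h True] by (simp add: actbar_app)
    next
      case False then show ?thesis unfolding actbar_def by simp
    qed
  qed
  then show ?thesis unfolding Gbar_def by simp
qed

lemma permbar_actbar: "i < d \<Longrightarrow> permbar (actbar d perm sec g) i = perm g i"
  unfolding permbar_def by (simp add: actbar_app)

lemma secbar_actbar: "i < d \<Longrightarrow> secbar d (actbar d perm sec g) i = actbar d perm sec (sec g i)"
proof -
  assume i: "i < d"
  show ?thesis unfolding secbar_def
  proof (rule ext)
    fix w show "restrict (\<lambda>w. tl (actbar d perm sec g (i # w))) (lists {0..<d}) w = actbar d perm sec (sec g i) w"
      using i by (cases "w \<in> lists {0..<d}") (simp_all add: actbar_app, simp add: actbar_def)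
  qed
qed

lemma carrier_Gbar: "carrier (Gbar G d perm sec) = actbar d perm sec ` carrier G"
  unfolding Gbar_def by simp

lemma WR_Gbar: assumes W: "WR G d perm sec" shows "WR (Gbar G d perm sec) d permbar (secbar d)"
  unfolding WR_def
proof (intro conjI ballI allI impI)
  fix f assume "f \<in> carrier (Gbar G d perm sec)"
  then obtain g where g: "g \<in> carrier G" "f = actbar d perm sec g" unfolding carrier_Gbar by blast
  have "bij_betw (perm g) {0..<d} {0..<d}" using WR_bij[OF W g(1)] .
  moreover have "\<forall>i\<in>{0..<d}. permbar f i = perm g i" using g(2) by (auto simp: permbar_actbar)
  ultimately show "bij_betw (permbar f) {0..<d} {0..<d}" using bij_betw_cong by metis
next
  fix f i assume f: "f \<in> carrier (Gbar G d perm sec)" and i: "i < d"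
  then obtain g where g: "g \<in> carrier G" "f = actbar d perm sec g" unfolding carrier_Gbar by blast
  have "secbar d f i = actbar d perm sec (sec g i)" using g(2) secbar_actbar[OF i] by simp
  then show "secbar d f i \<in> carrier (Gbar G d perm sec)" unfolding carrier_Gbar using WR_s[OF W g(1) i] by simp
next
  fix f h assume f: "f \<in> carrier (Gbar G d perm sec)" and h: "h \<in> carrier (Gbar G d perm sec)"
  obtain g where g: "g \<in> carrier G" "f = actbar d perm sec g" using f unfolding carrier_Gbar by blast
  obtain k where k: "k \<in> carrier G" "h = actbar d perm sec k" using h unfolding carrier_Gbar by blast
  have m: "f \<otimes>\<^bsub>Gbar G d perm sec\<^esub> h = actbar d perm sec (g \<otimes>\<^bsub>G\<^esub> k)" using actbar_mult[OF W g(1) k(1)] g k by simp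
  have gk: "g \<otimes>\<^bsub>G\<^esub> k \<in> carrier G" using WR_m[OF W g(1) k(1)] .
  show "f \<otimes>\<^bsub>Gbar G d perm sec\<^esub> h \<in> carrier (Gbar G d perm sec)" unfolding m carrier_Gbar using gk by simp
  fix i assume i: "i < d"
  have pk: "perm k i < d" using WR_p[OF W k(1) i] .
  have sgc: "sec g (perm k i) \<in> carrier G" using WR_s[OF W g(1) pk] .
  have skc: "sec k i \<in> carrier G" using WR_s[OF W k(1) i] .
  show "permbar (f \<otimes>\<^bsub>Gbar G d perm sec\<^esub> h) i = permbar f (permbar h i)"
    unfolding m unfolding g(2) k(2) permbar_actbar[OF i] permbar_actbar[OF pk]
    using WR_pm[OF W g(1) k(1) i] by simp
  fix j assume j: "j < d"
  have pkj: "perm k j < d" using WR_p[OF W k(1) j] .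
  show "secbar d (f \<otimes>\<^bsub>Gbar G d perm sec\<^esub> h) j = secbar d f (permbar h j) \<otimes>\<^bsub>Gbar G d perm sec\<^esub> secbar d h j"
    unfolding m unfolding g(2) k(2) permbar_actbar[OF j] secbar_actbar[OF j] secbar_actbar[OF pkj]
    using WR_sm[OF W g(1) k(1) j] actbar_mult[OF W WR_s[OF W g(1) pkj] WR_s[OF W k(1) j]]
    by simp
qed

lemma act_bar: assumes W: "WR G d perm sec" and g: "g \<in> carrier G" and w: "w \<in> lists {0..<d}"
  shows "act permbar (secbar d) (actbar d perm sec g) w = act perm sec g w \<and>
         secw (secbar d) (actbar d perm sec g) w = actbar d perm sec (secw sec g w)"
  using g w
proof (induction w arbitrary: g)
  case Nil then show ?case by simp
next
  case (Cons x w)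
  then have x: "x < d" and wl: "w \<in> lists {0..<d}" by auto
  have sc: "sec g x \<in> carrier G" using WR_s[OF W Cons.prems(1) x] .
  show ?case using Cons.IH[OF sc wl] by (simp add: permbar_actbar[OF x] secbar_actbar[OF x])
qed




abbreviation mid :: "('g \<Rightarrow> 'h) \<Rightarrow> (nat list \<times> 'g \<times> nat list) set \<Rightarrow> (nat list \<times> 'h \<times> nat list) set" where
  "mid f T \<equiv> (\<lambda>(v, g, u). (v, f g, u)) ` T"

lemma mid_mem: "(v, g, u) \<in> T \<Longrightarrow> (v, f g, u) \<in> mid f T"
  by force

lemma mid_E: assumes "t \<in> mid f T" obtains v g u where "t = (v, f g, u)" "(v, g, u) \<in> T"
  using assms by force

lemma vs_mid: "vs (mid f T) = vs T"
  by (simp add: image_image case_prod_beta)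

lemma us_mid: "us (mid f T) = us T"
  by (simp add: image_image case_prod_beta)

lemma inj_v_mid: assumes "inj_on (\<lambda>(v, g, u). v) T" shows "inj_on (\<lambda>(v, g, u). v) (mid f T)"
proof (rule inj_onI)
  fix a b assume a: "a \<in> mid f T" and b: "b \<in> mid f T" and ab: "(\<lambda>(v, g, u). v) a = (\<lambda>(v, g, u). v) b"
  obtain v g u where ta: "a = (v, f g, u)" "(v, g, u) \<in> T" using a by (rule mid_E)
  obtain v' g' u' where tb: "b = (v', f g', u')" "(v', g', u') \<in> T" using b by (rule mid_E)
  have "(v, g, u) = (v', g', u')" by (rule inj_onD[OF assms _ ta(2) tb(2)]) (use ab ta tb in simp)
  then show "a = b" using ta tb by simp
qed

lemma inj_u_mid: assumes "inj_on (\<lambda>(v, g, u). u) T" shows "inj_on (\<lambda>(v, g, u). u) (mid f T)"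
proof (rule inj_onI)
  fix a b assume a: "a \<in> mid f T" and b: "b \<in> mid f T" and ab: "(\<lambda>(v, g, u). u) a = (\<lambda>(v, g, u). u) b"
  obtain v g u where ta: "a = (v, f g, u)" "(v, g, u) \<in> T" using a by (rule mid_E)
  obtain v' g' u' where tb: "b = (v', f g', u')" "(v', g', u') \<in> T" using b by (rule mid_E)
  have "(v, g, u) = (v', g', u')" by (rule inj_onD[OF assms _ ta(2) tb(2)]) (use ab ta tb in simp)
  then show "a = b" using ta tb by simp
qed

lemma valid_mid:
  assumes val: "valid_table H d T" and car: "\<forall>(v, g, u)\<in>T. f g \<in> carrier H'"
  shows "valid_table H' d (mid f T)"
proof -
  have fin: "finite (mid f T)" using valid_finite[OF val] by simp
  have c: "\<forall>(v, g, u)\<in>mid f T. g \<in> carrier H'"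
  proof
    fix t assume "t \<in> mid f T"
    then obtain v g u where t: "t = (v, f g, u)" "(v, g, u) \<in> T" by (rule mid_E)
    then show "case t of (v, g, u) \<Rightarrow> g \<in> carrier H'" using car by auto
  qed
  have iv: "inj_on (\<lambda>(v, g, u). v) T" and iu: "inj_on (\<lambda>(v, g, u). u) T"
    using val unfolding valid_table_def by blast+
  show ?thesis unfolding valid_table_def
    using fin c inj_v_mid[OF iv, of f] inj_u_mid[OF iu, of f] vs_mid[of f T] us_mid[of f T] valid_ca_vs[OF val] valid_ca_us[OF val]
    by simp
qed

abbreviation img where "img d perm sec T \<equiv> mid (actbar d perm sec) T"

lemma valid_img: assumes "valid_table G d T" shows "valid_table (Gbar G d perm sec) d (img d perm sec T)"
proof (rule valid_mid[OF assms])
  show "\<forall>(v, g, u)\<in>T. actbar d perm sec g \<in> carrier (Gbar G d perm sec)"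
    using valid_carrier[OF assms] unfolding carrier_Gbar by auto
qed

lemma R_img:
  assumes W: "WR G d perm sec" and val: "valid_table G d T"
  shows "R d permbar (secbar d) (img d perm sec T) = mid (actbar d perm sec) (R d perm sec T)"
proof
  show "R d permbar (secbar d) (img d perm sec T) \<subseteq> mid (actbar d perm sec) (R d perm sec T)"
  proof
    fix t assume t: "t \<in> R d permbar (secbar d) (img d perm sec T)"
    obtain v f u w where tt: "t = (v @ w, secw (secbar d) f w, u @ act permbar (secbar d) f w)"
       "(v, f, u) \<in> img d perm sec T" "w \<in> lists {0..<d}"
      by (rule R_E[OF t])
    obtain v' g u' where c: "(v, f, u) = (v', actbar d perm sec g, u')" "(v', g, u') \<in> T"
      using tt(2) by (rule mid_E)
    have gc: "g \<in> carrier G" using valid_carrier[OF val c(2)] .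
    have e: "t = (v @ w, actbar d perm sec (secw sec g w), u @ act perm sec g w)"
      using tt(1) c(1) act_bar[OF W gc tt(3)] by simp
    have "(v @ w, secw sec g w, u @ act perm sec g w) \<in> R d perm sec T"
      using R_I[OF c(2) tt(3)] c(1) by simp
    from mid_mem[OF this, of "actbar d perm sec"] show "t \<in> mid (actbar d perm sec) (R d perm sec T)"
      using e by simp
  qed
next
  show "mid (actbar d perm sec) (R d perm sec T) \<subseteq> R d permbar (secbar d) (img d perm sec T)"
  proof
    fix t assume t: "t \<in> mid (actbar d perm sec) (R d perm sec T)"
    obtain x a y where ta: "t = (x, actbar d perm sec a, y)" "(x, a, y) \<in> R d perm sec T"
      using t by (rule mid_E)
    obtain v g u w where tt: "(x, a, y) = (v @ w, secw sec g w, u @ act perm sec g w)"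
       "(v, g, u) \<in> T" "w \<in> lists {0..<d}"
      by (rule R_E[OF ta(2)])
    have gc: "g \<in> carrier G" using valid_carrier[OF val tt(2)] .
    have c: "(v, actbar d perm sec g, u) \<in> img d perm sec T" using mid_mem[OF tt(2)] .
    have "(v @ w, secw (secbar d) (actbar d perm sec g) w, u @ act permbar (secbar d) (actbar d perm sec g) w)
       \<in> R d permbar (secbar d) (img d perm sec T)" using R_I[OF c tt(3)] .
    then show "t \<in> R d permbar (secbar d) (img d perm sec T)"
      using ta(1) tt(1) act_bar[OF W gc tt(3)] by simp
  qed
qed

lemma agree_mid: "agree_from M X Y \<Longrightarrow> agree_from M (mid f X) (mid f Y)"
  unfolding agree_from_def by force

lemma rel_img:
  assumes W: "WR G d perm sec" and r: "(T, T') \<in> table_rel G d perm sec"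
  shows "(img d perm sec T, img d perm sec T') \<in> table_rel (Gbar G d perm sec) d permbar (secbar d)"
proof -
  have v: "valid_table G d T" "valid_table G d T'" and e: "eq_ev d perm sec T T'"
    using r rel_char[OF W] by blast+
  obtain M where M: "agree_from M (R d perm sec T) (R d perm sec T')" using e unfolding eq_ev_def by blast
  have "agree_from M (R d permbar (secbar d) (img d perm sec T)) (R d permbar (secbar d) (img d perm sec T'))"
    unfolding R_img[OF W v(1)] R_img[OF W v(2)] by (rule agree_mid[OF M])
  then have "eq_ev d permbar (secbar d) (img d perm sec T) (img d perm sec T')" unfolding eq_ev_def by blast
  then show ?thesis using rel_char[OF WR_Gbar[OF W]] valid_img[OF v(1)] valid_img[OF v(2)] by blast
qed

lemma natmap_cls:
  assumes W: "WR G d perm sec" and val: "valid_table G d T"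
  shows "natural_map G d perm sec (cls G d perm sec T) = cls (Gbar G d perm sec) d permbar (secbar d) (img d perm sec T)"
proof -
  have ex: "\<exists>X. X \<in> cls G d perm sec T" using rel_refl[OF val] by blast
  have "(SOME X. X \<in> cls G d perm sec T) \<in> cls G d perm sec T" using someI_ex[OF ex] .
  then have r: "(T, SOME X. X \<in> cls G d perm sec T) \<in> table_rel G d perm sec" by simp
  have "(img d perm sec T, img d perm sec (SOME X. X \<in> cls G d perm sec T)) \<in> table_rel (Gbar G d perm sec) d permbar (secbar d)"
    using rel_img[OF W r] .
  then have "cls (Gbar G d perm sec) d permbar (secbar d) (img d perm sec T) =
             cls (Gbar G d perm sec) d permbar (secbar d) (img d perm sec (SOME X. X \<in> cls G d perm sec T))"
    by (rule cls_eq)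
  then show ?thesis unfolding natural_map_def by simp
qed

lemma img_compose:
  assumes W: "WR G d perm sec" and v1: "valid_table G d T1" and v2: "valid_table G d T2"
  shows "img d perm sec (compose_tables G T1 T2) = compose_tables (Gbar G d perm sec) (img d perm sec T1) (img d perm sec T2)"
proof
  show "img d perm sec (compose_tables G T1 T2) \<subseteq> compose_tables (Gbar G d perm sec) (img d perm sec T1) (img d perm sec T2)"
  proof
    fix t assume "t \<in> img d perm sec (compose_tables G T1 T2)"
    then obtain v k u where t: "t = (v, actbar d perm sec k, u)" "(v, k, u) \<in> compose_tables G T1 T2" by (rule mid_E)
    obtain v' g h u' w where c: "(v, k, u) = (v', g \<otimes>\<^bsub>G\<^esub> h, u')" "(w, g, u') \<in> T1" "(v', h, w) \<in> T2"
      using t(2) by (rule compose_E)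
    have e: "actbar d perm sec k = actbar d perm sec g \<otimes>\<^bsub>Gbar G d perm sec\<^esub> actbar d perm sec h"
      using actbar_mult[OF W valid_carrier[OF v1 c(2)] valid_carrier[OF v2 c(3)]] c(1) by simp
    have "(v', actbar d perm sec g \<otimes>\<^bsub>Gbar G d perm sec\<^esub> actbar d perm sec h, u') \<in>
           compose_tables (Gbar G d perm sec) (img d perm sec T1) (img d perm sec T2)"
      using compose_I[OF mid_mem[OF c(2)] mid_mem[OF c(3)]] .
    then show "t \<in> compose_tables (Gbar G d perm sec) (img d perm sec T1) (img d perm sec T2)"
      using t(1) c(1) e by simp
  qed
next
  show "compose_tables (Gbar G d perm sec) (img d perm sec T1) (img d perm sec T2) \<subseteq> img d perm sec (compose_tables G T1 T2)"
  proof
    fix t assume "t \<in> compose_tables (Gbar G d perm sec) (img d perm sec T1) (img d perm sec T2)"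
    then obtain v f1 f2 u w where c: "t = (v, f1 \<otimes>\<^bsub>Gbar G d perm sec\<^esub> f2, u)" "(w, f1, u) \<in> img d perm sec T1"
       "(v, f2, w) \<in> img d perm sec T2" by (rule compose_E)
    obtain w1 g u1 where c1: "(w, f1, u) = (w1, actbar d perm sec g, u1)" "(w1, g, u1) \<in> T1" using c(2) by (rule mid_E)
    obtain v2 h w2 where c2: "(v, f2, w) = (v2, actbar d perm sec h, w2)" "(v2, h, w2) \<in> T2" using c(3) by (rule mid_E)
    have "(w, g, u) \<in> T1" "(v, h, w) \<in> T2" using c1 c2 by auto
    then have "(v, g \<otimes>\<^bsub>G\<^esub> h, u) \<in> compose_tables G T1 T2" by (rule compose_I)
    then have "(v, actbar d perm sec (g \<otimes>\<^bsub>G\<^esub> h), u) \<in> img d perm sec (compose_tables G T1 T2)" by (rule mid_mem)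
    moreover have "actbar d perm sec (g \<otimes>\<^bsub>G\<^esub> h) = f1 \<otimes>\<^bsub>Gbar G d perm sec\<^esub> f2"
      using actbar_mult[OF W valid_carrier[OF v1 c1(2)] valid_carrier[OF v2 c2(2)]] c1(1) c2(1) by simp
    ultimately show "t \<in> img d perm sec (compose_tables G T1 T2)" using c(1) by simp
  qed
qed

lemma surj_img:
  assumes val: "valid_table (Gbar G d perm sec) d S"
  shows "\<exists>T. valid_table G d T \<and> img d perm sec T = S"
proof -
  define pre where "pre f = (SOME g. g \<in> carrier G \<and> f = actbar d perm sec g)" for f
  have pre: "pre f \<in> carrier G \<and> actbar d perm sec (pre f) = f" if "f \<in> carrier (Gbar G d perm sec)" for f
  proof -
    have "\<exists>g. g \<in> carrier G \<and> f = actbar d perm sec g" using that unfolding carrier_Gbar by blast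
    from someI_ex[OF this] show ?thesis unfolding pre_def by simp
  qed
  define T where "T = mid pre S"
  have vT: "valid_table G d T" unfolding T_def
    by (rule valid_mid[OF val]) (use pre valid_carrier[OF val] in auto)
  have "img d perm sec T = mid (actbar d perm sec \<circ> pre) S" unfolding T_def by (simp add: image_image case_prod_beta)
  also have "\<dots> = S"
  proof
    show "mid (actbar d perm sec \<circ> pre) S \<subseteq> S"
    proof
      fix t assume "t \<in> mid (actbar d perm sec \<circ> pre) S"
      then obtain v f u where t: "t = (v, (actbar d perm sec \<circ> pre) f, u)" "(v, f, u) \<in> S" by (rule mid_E)
      have "actbar d perm sec (pre f) = f" using pre valid_carrier[OF val t(2)] by blast
      then show "t \<in> S" using t by simp
    qed
  next
    show "S \<subseteq> mid (actbar d perm sec \<circ> pre) S"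
    proof
      fix t assume t: "t \<in> S"
      obtain v f u where tt: "t = (v, f, u)" by (cases t) auto
      have "actbar d perm sec (pre f) = f" using pre valid_carrier[OF val] t tt by blast
      then have "(v, (actbar d perm sec \<circ> pre) f, u) = t" using tt by simp
      then show "t \<in> mid (actbar d perm sec \<circ> pre) S" using mid_mem[of v f u S "actbar d perm sec \<circ> pre"] t tt by simp
    qed
  qed
  finally show ?thesis using vT by blast
qed




lemma agree_D: "agree_from M X Y \<Longrightarrow> M \<le> length x \<Longrightarrow> (x, g, y) \<in> X \<Longrightarrow> (x, g, y) \<in> Y"
  unfolding agree_from_def by blast

lemma R_func: assumes val: "valid_table H d T" and r1: "(x, a, y) \<in> R d p s T" and r2: "(x, a', y') \<in> R d p s T"
  shows "a' = a \<and> y' = y"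
proof -
  obtain v g u w where t1: "(x, a, y) = (v @ w, secw s g w, u @ act p s g w)" "(v, g, u) \<in> T" "w \<in> lists {0..<d}"
    by (rule R_E[OF r1])
  obtain v' g' u' w' where t2: "(x, a', y') = (v' @ w', secw s g' w', u' @ act p s g' w')" "(v', g', u') \<in> T" "w' \<in> lists {0..<d}"
    by (rule R_E[OF r2])
  have x1: "x = v @ w" using t1(1) by simp
  have x2: "x = v' @ w'" using t2(1) by simp
  have "pfx v x" "pfx v' x" unfolding pfx_def using x1 x2 by blast+
  then have vv: "v' = v" using ca_pfx_unique[OF valid_ca_vs[OF val] mem_vs[OF t2(2)] mem_vs[OF t1(2)]] by simp
  then have "g' = g \<and> u' = u" using valid_inj_v[OF val t1(2), of g' u'] t2(2) by simp
  moreover have "w' = w" using t1(1) t2(1) vv by simp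
  ultimately show ?thesis using t1(1) t2(1) by simp
qed

lemma R_total: assumes val: "valid_table H d T" and x: "x \<in> lists {0..<d}" "x \<noteq> []"
    and l: "\<forall>a\<in>vs T. length a \<le> length x"
  shows "\<exists>a y. (x, a, y) \<in> R d p s T"
proof -
  obtain v where v: "v \<in> vs T" "pfx v x" using ca_P2[OF valid_ca_vs[OF val] x l] by blast
  obtain g u where c: "(v, g, u) \<in> T" using v(1) by (rule vs_E)
  obtain w where w: "x = v @ w" using v(2) unfolding pfx_def by blast
  have "w \<in> lists {0..<d}" using x(1) w by simp
  from R_I[OF c this] show ?thesis using w by blast
qed

lemma R_ext: assumes r: "(x, a, y) \<in> R d p s T" and w: "w \<in> lists {0..<d}"
  shows "(x @ w, secw s a w, y @ act p s a w) \<in> R d p s T"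
proof -
  obtain v g u w0 where t: "(x, a, y) = (v @ w0, secw s g w0, u @ act p s g w0)" "(v, g, u) \<in> T" "w0 \<in> lists {0..<d}"
    by (rule R_E[OF r])
  have "w0 @ w \<in> lists {0..<d}" using t(3) w by simp
  from R_I[OF t(2) this] show ?thesis using t(1) by (simp add: act_append secw_append)
qed

lemma R_carrier: assumes W: "WR H d p s" and val: "valid_table H d T" and r: "(x, a, y) \<in> R d p s T"
  shows "a \<in> carrier H"
proof -
  obtain v g u w where t: "(x, a, y) = (v @ w, secw s g w, u @ act p s g w)" "(v, g, u) \<in> T" "w \<in> lists {0..<d}"
    by (rule R_E[OF r])
  show ?thesis using secw_carrier[OF W valid_carrier[OF val t(2)] t(3)] t(1) by simp
qed

lemma R_xlists: assumes val: "valid_table H d T" and r: "(x, a, y) \<in> R d p s T"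
  shows "x \<in> lists {0..<d}"
proof -
  obtain v g u w where t: "(x, a, y) = (v @ w, secw s g w, u @ act p s g w)" "(v, g, u) \<in> T" "w \<in> lists {0..<d}"
    by (rule R_E[OF r])
  show ?thesis using valid_vs_lists[OF val t(2)] t(1,3) by simp
qed

lemma fin_choice: "finite S \<Longrightarrow> (\<forall>x\<in>S. \<exists>n::nat. \<forall>m\<ge>n. P x m) \<Longrightarrow> \<exists>n. \<forall>x\<in>S. \<forall>m\<ge>n. P x m"
proof (induction S rule: finite_induct)
  case empty then show ?case by simp
next
  case (insert x F)
  obtain n1 where n1: "\<forall>m\<ge>n1. P x m" using insert.prems by blast
  obtain n2 where n2: "\<forall>y\<in>F. \<forall>m\<ge>n2. P y m" using insert.IH insert.prems by blast
  have "\<forall>y\<in>insert x F. \<forall>m\<ge>max n1 n2. P y m" using n1 n2 by auto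
  then show ?case by blast
qed

lemma inj_key:
  assumes grp: "group G" and wr: "wreath_recursion G d perm sec"
    and hyp: "(\<Union>n. Kset G d perm sec n) = action_kernel G d perm sec"
    and v: "valid_table G d T" and v': "valid_table G d T'"
    and e: "eq_ev d permbar (secbar d) (img d perm sec T) (img d perm sec T')"
  shows "eq_ev d perm sec T T'"
proof -
  interpret G: group G by (rule grp)
  have W: "WR G d perm sec" using WR_G[OF grp wr] .
  obtain M where M0: "agree_from M (R d permbar (secbar d) (img d perm sec T)) (R d permbar (secbar d) (img d perm sec T'))"
    using e unfolding eq_ev_def by blast
  have M: "agree_from M (mid (actbar d perm sec) (R d perm sec T)) (mid (actbar d perm sec) (R d perm sec T'))"
    using M0 unfolding R_img[OF W v] R_img[OF W v'] .
  obtain N1 where N1: "\<forall>a\<in>vs T. length a \<le> N1" using valid_bound[OF v] by blast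
  obtain N2 where N2: "\<forall>a\<in>vs T'. length a \<le> N2" using valid_bound[OF v'] by blast
  define N where "N = Suc (max M (max N1 N2))"
  have tot: "(\<exists>a y. (x, a, y) \<in> R d perm sec T) \<and> (\<exists>a y. (x, a, y) \<in> R d perm sec T')" if x: "x \<in> U d N" for x
  proof -
    have xl: "x \<in> lists {0..<d}" and lx: "length x = N" using x unfolding U_def by auto
    have ne: "x \<noteq> []" using lx unfolding N_def by auto
    have n1: "N1 \<le> length x" "N2 \<le> length x" using lx unfolding N_def by simp_all
    have "\<forall>a\<in>vs T. length a \<le> length x"
    proof
      fix a assume "a \<in> vs T" then have "length a \<le> N1" by (rule bspec[OF N1])
      then show "length a \<le> length x" using n1(1) by simp
    qed
    moreover have "\<forall>a\<in>vs T'. length a \<le> length x"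
    proof
      fix a assume "a \<in> vs T'" then have "length a \<le> N2" by (rule bspec[OF N2])
      then show "length a \<le> length x" using n1(2) by simp
    qed
    ultimately show ?thesis using R_total[OF v xl ne, of perm sec] R_total[OF v' xl ne, of perm sec] by simp
  qed
  define P where "P x m \<longleftrightarrow> (\<forall>a y a' y'. (x, a, y) \<in> R d perm sec T \<longrightarrow> (x, a', y') \<in> R d perm sec T' \<longrightarrow>
      y' = y \<and> (\<forall>w\<in>lists {0..<d}. length w = m \<longrightarrow> secw sec a' w = secw sec a w \<and> act perm sec a' w = act perm sec a w))"
    for x m
  have each: "\<forall>x\<in>U d N. \<exists>n. \<forall>m\<ge>n. P x m"
  proof
    fix x assume x: "x \<in> U d N"
    obtain a y where r: "(x, a, y) \<in> R d perm sec T" using tot[OF x] by blast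
    obtain a' y' where r': "(x, a', y') \<in> R d perm sec T'" using tot[OF x] by blast
    have "length x = N" using x unfolding U_def by simp
    then have lx: "M \<le> length x" unfolding N_def by simp
    have "(x, actbar d perm sec a, y) \<in> mid (actbar d perm sec) (R d perm sec T')"
      using agree_D[OF M lx mid_mem[OF r]] .
    then obtain x0 a'' y0 where m: "(x, actbar d perm sec a, y) = (x0, actbar d perm sec a'', y0)" "(x0, a'', y0) \<in> R d perm sec T'"
      by (rule mid_E)
    have r'': "(x, a'', y) \<in> R d perm sec T'" using m by simp
    have fa: "a'' = a' \<and> y = y'" using R_func[OF v' r' r''] .
    have ab: "actbar d perm sec a = actbar d perm sec a'" using m fa by simp
    have yy: "y' = y" using fa by simp
    have ac: "a \<in> carrier G" using R_carrier[OF W v r] .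
    have a'c: "a' \<in> carrier G" using R_carrier[OF W v' r'] .
    define k where "k = inv\<^bsub>G\<^esub> a' \<otimes>\<^bsub>G\<^esub> a"
    have ic: "inv\<^bsub>G\<^esub> a' \<in> carrier G" using a'c by simp
    have kc: "k \<in> carrier G" unfolding k_def using ic ac by simp
    have akk: "a = a' \<otimes>\<^bsub>G\<^esub> k" unfolding k_def using a'c ac ic
      by (simp add: G.m_assoc[symmetric])
    have "k \<in> action_kernel G d perm sec"
      unfolding action_kernel_def
    proof (intro CollectI conjI ballI kc)
      fix w assume w: "w \<in> lists {0..<d}"
      have aw: "act perm sec a w = act perm sec a' w"
        using fun_cong[OF ab, of w] w by (simp add: actbar_app)
      have "act perm sec k w = act perm sec (inv\<^bsub>G\<^esub> a') (act perm sec a w)"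
        unfolding k_def using act_mult[OF W ic ac w] by simp
      also have "\<dots> = act perm sec (inv\<^bsub>G\<^esub> a') (act perm sec a' w)" using aw by simp
      also have "\<dots> = act perm sec (inv\<^bsub>G\<^esub> a' \<otimes>\<^bsub>G\<^esub> a') w" using act_mult[OF W ic a'c w] by simp
      also have "\<dots> = w" using a'c act_one[OF grp wr w] by simp
      finally show "act perm sec k w = w" .
    qed
    then obtain n where kn: "k \<in> Kset G d perm sec n" using hyp by blast
    have "\<forall>m\<ge>n. P x m"
    proof (intro allI impI)
      fix m assume nm: "n \<le> m"
      have km: "k \<in> Kset G d perm sec m" using Kset_mono[OF grp wr nm] kn by blast
      show "P x m" unfolding P_def
      proof (intro allI impI)
        fix a0 y0 a0' y0' assume r0: "(x, a0, y0) \<in> R d perm sec T" and r0': "(x, a0', y0') \<in> R d perm sec T'"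
        have e1: "a0 = a \<and> y0 = y" using R_func[OF v r r0] .
        have e2: "a0' = a' \<and> y0' = y'" using R_func[OF v' r' r0'] .
        have "\<forall>w\<in>lists {0..<d}. length w = m \<longrightarrow> secw sec a' w = secw sec a w \<and> act perm sec a' w = act perm sec a w"
        proof (intro ballI impI)
          fix w assume w: "w \<in> lists {0..<d}" and lw: "length w = m"
          have kk: "act perm sec k w = w \<and> secw sec k w = \<one>\<^bsub>G\<^esub>" using km w lw unfolding Kset_def by blast
          have am: "act perm sec (a' \<otimes>\<^bsub>G\<^esub> k) w = act perm sec a' (act perm sec k w) \<and>
              secw sec (a' \<otimes>\<^bsub>G\<^esub> k) w = secw sec a' (act perm sec k w) \<otimes>\<^bsub>G\<^esub> secw sec k w"
            using act_mult[OF W a'c kc w] .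
          have sc: "secw sec a' w \<in> carrier G" using secw_carrier[OF W a'c w] .
          show "secw sec a' w = secw sec a w \<and> act perm sec a' w = act perm sec a w"
            using am kk sc akk by simp
        qed
        then show "y0' = y0 \<and> (\<forall>w\<in>lists {0..<d}. length w = m \<longrightarrow> secw sec a0' w = secw sec a0 w \<and> act perm sec a0' w = act perm sec a0 w)"
          using e1 e2 yy by simp
      qed
    qed
    then show "\<exists>n. \<forall>m\<ge>n. P x m" by blast
  qed
  obtain n where n: "\<forall>x\<in>U d N. \<forall>m\<ge>n. P x m" using fin_choice[OF ca_finite[OF ca_U] each] by blast
  have dec: "\<exists>x w. z = x @ w \<and> x \<in> U d N \<and> w \<in> lists {0..<d} \<and> n \<le> length w"
    if zl: "z \<in> lists {0..<d}" and lz: "N + n \<le> length z" for z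
  proof -
    have "take N z \<in> U d N" unfolding U_def using zl lz by (auto simp: in_lists_conv_set dest: in_set_takeD)
    moreover have "drop N z \<in> lists {0..<d}" using zl by (auto simp: in_lists_conv_set dest: in_set_dropD)
    moreover have "n \<le> length (drop N z)" using lz by simp
    ultimately show ?thesis by (metis append_take_drop_id)
  qed
  have "agree_from (N + n) (R d perm sec T) (R d perm sec T')"
    unfolding agree_from_def
  proof (intro allI impI iffI)
    fix z b q assume lz: "N + n \<le> length z" and r: "(z, b, q) \<in> R d perm sec T"
    have zl: "z \<in> lists {0..<d}" using R_xlists[OF v r] .
    obtain x w where xw: "z = x @ w" "x \<in> U d N" "w \<in> lists {0..<d}" "n \<le> length w" using dec[OF zl lz] by blast
    obtain a y where ra: "(x, a, y) \<in> R d perm sec T" using tot[OF xw(2)] by blast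
    obtain a' y' where ra': "(x, a', y') \<in> R d perm sec T'" using tot[OF xw(2)] by blast
    have "b = secw sec a w \<and> q = y @ act perm sec a w" using R_func[OF v R_ext[OF ra xw(3)] r[unfolded xw(1)]] by simp
    moreover have "P x (length w)" using n xw(2,4) by blast
    then have "y' = y \<and> secw sec a' w = secw sec a w \<and> act perm sec a' w = act perm sec a w"
      unfolding P_def using ra ra' xw(3) by blast
    ultimately show "(z, b, q) \<in> R d perm sec T'" using R_ext[OF ra' xw(3)] xw(1) by simp
  next
    fix z b q assume lz: "N + n \<le> length z" and r: "(z, b, q) \<in> R d perm sec T'"
    have zl: "z \<in> lists {0..<d}" using R_xlists[OF v' r] .
    obtain x w where xw: "z = x @ w" "x \<in> U d N" "w \<in> lists {0..<d}" "n \<le> length w" using dec[OF zl lz] by blast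
    obtain a y where ra: "(x, a, y) \<in> R d perm sec T" using tot[OF xw(2)] by blast
    obtain a' y' where ra': "(x, a', y') \<in> R d perm sec T'" using tot[OF xw(2)] by blast
    have "b = secw sec a' w \<and> q = y' @ act perm sec a' w" using R_func[OF v' R_ext[OF ra' xw(3)] r[unfolded xw(1)]] by simp
    moreover have "P x (length w)" using n xw(2,4) by blast
    then have "y' = y \<and> secw sec a' w = secw sec a w \<and> act perm sec a' w = act perm sec a w"
      unfolding P_def using ra ra' xw(3) by blast
    ultimately show "(z, b, q) \<in> R d perm sec T" using R_ext[OF ra xw(3)] xw(1) by simp
  qed
  then show ?thesis unfolding eq_ev_def by blast
qed




theorem proposition3p9:
  fixes G :: "'g monoid" and d :: nat
    and perm :: "'g \<Rightarrow> nat \<Rightarrow> nat" and sec :: "'g \<Rightarrow> nat \<Rightarrow> 'g"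
  assumes "group G"
    and "wreath_recursion G d perm sec"
  shows "(\<forall>n\<ge>1. Kset G d perm sec (n - 1) \<subseteq> Kset G d perm sec n) \<and>
         ((\<Union>n. Kset G d perm sec n) = action_kernel G d perm sec \<longrightarrow>
            natural_map G d perm sec \<in>
              iso (V_group G d perm sec) (V_group (Gbar G d perm sec) d permbar (secbar d)))"
proof
  note grp = assms(1) and wr = assms(2)
  have W: "WR G d perm sec" using WR_G[OF grp wr] .
  have Wb: "WR (Gbar G d perm sec) d permbar (secbar d)" using WR_Gbar[OF W] .
  show "\<forall>n\<ge>1. Kset G d perm sec (n - 1) \<subseteq> Kset G d perm sec n"
  proof (intro allI impI)
    fix n :: nat assume "1 \<le> n"
    then have "n - 1 \<le> n" by simp
    then show "Kset G d perm sec (n - 1) \<subseteq> Kset G d perm sec n" by (rule Kset_mono[OF grp wr])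
  qed
  show "(\<Union>n. Kset G d perm sec n) = action_kernel G d perm sec \<longrightarrow>
            natural_map G d perm sec \<in>
              iso (V_group G d perm sec) (V_group (Gbar G d perm sec) d permbar (secbar d))"
  proof
    assume hyp: "(\<Union>n. Kset G d perm sec n) = action_kernel G d perm sec"
    let ?V = "V_group G d perm sec"
    let ?W = "V_group (Gbar G d perm sec) d permbar (secbar d)"
    let ?f = "natural_map G d perm sec"
    have fcar: "?f A \<in> carrier ?W" if A: "A \<in> carrier ?V" for A
    proof -
      obtain T where T: "valid_table G d T" "A = cls G d perm sec T" using A unfolding carrier_V by blast
      have "?f A = cls (Gbar G d perm sec) d permbar (secbar d) (img d perm sec T)"
        using natmap_cls[OF W T(1)] T(2) by simp
      then show ?thesis unfolding carrier_V using valid_img[OF T(1)] by blast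
    qed
    have hom: "?f \<in> hom ?V ?W"
    proof (rule homI)
      fix A assume "A \<in> carrier ?V" then show "?f A \<in> carrier ?W" by (rule fcar)
    next
      fix A B assume A: "A \<in> carrier ?V" and B: "B \<in> carrier ?V"
      obtain T1 where T1: "valid_table G d T1" "A = cls G d perm sec T1" using A unfolding carrier_V by blast
      obtain T2 where T2: "valid_table G d T2" "B = cls G d perm sec T2" using B unfolding carrier_V by blast
      obtain S1 S2 where S: "(T1, S1) \<in> table_rel G d perm sec" "(T2, S2) \<in> table_rel G d perm sec" "vs S1 = us S2"
        using match_exists[OF W T1(1) T2(1)] by blast
      have vS1: "valid_table G d S1" using rel_valid[OF S(1)] by blast
      have vS2: "valid_table G d S2" using rel_valid[OF S(2)] by blast
      have AB: "A \<otimes>\<^bsub>?V\<^esub> B = cls G d perm sec (compose_tables G S1 S2)"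
        using V_mult[OF W S] T1(2) T2(2) by simp
      have vC: "valid_table G d (compose_tables G S1 S2)" using valid_compose[OF W vS1 vS2 S(3)] by blast
      have "?f (A \<otimes>\<^bsub>?V\<^esub> B) = cls (Gbar G d perm sec) d permbar (secbar d) (img d perm sec (compose_tables G S1 S2))"
        using natmap_cls[OF W vC] AB by simp
      also have "\<dots> = cls (Gbar G d perm sec) d permbar (secbar d)
                       (compose_tables (Gbar G d perm sec) (img d perm sec S1) (img d perm sec S2))"
        using img_compose[OF W vS1 vS2] by simp
      also have "\<dots> = cls (Gbar G d perm sec) d permbar (secbar d) (img d perm sec T1) \<otimes>\<^bsub>?W\<^esub>
                       cls (Gbar G d perm sec) d permbar (secbar d) (img d perm sec T2)"
      proof -
        have m: "vs (img d perm sec S1) = us (img d perm sec S2)" using S(3) vs_mid us_mid by metis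
        show ?thesis using V_mult[OF Wb rel_img[OF W S(1)] rel_img[OF W S(2)] m] by simp
      qed
      also have "\<dots> = ?f A \<otimes>\<^bsub>?W\<^esub> ?f B"
        using natmap_cls[OF W T1(1)] natmap_cls[OF W T2(1)] T1(2) T2(2) by simp
      finally show "?f (A \<otimes>\<^bsub>?V\<^esub> B) = ?f A \<otimes>\<^bsub>?W\<^esub> ?f B" .
    qed
    have inj: "inj_on ?f (carrier ?V)"
    proof (rule inj_onI)
      fix A B assume A: "A \<in> carrier ?V" and B: "B \<in> carrier ?V" and e: "?f A = ?f B"
      obtain T1 where T1: "valid_table G d T1" "A = cls G d perm sec T1" using A unfolding carrier_V by blast
      obtain T2 where T2: "valid_table G d T2" "B = cls G d perm sec T2" using B unfolding carrier_V by blast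
      have "cls (Gbar G d perm sec) d permbar (secbar d) (img d perm sec T1) =
            cls (Gbar G d perm sec) d permbar (secbar d) (img d perm sec T2)"
        using e natmap_cls[OF W T1(1)] natmap_cls[OF W T2(1)] T1(2) T2(2) by simp
      then have "(img d perm sec T1, img d perm sec T2) \<in> table_rel (Gbar G d perm sec) d permbar (secbar d)"
        using cls_eq_iff[OF valid_img[OF T2(1)]] by blast
      then have "eq_ev d permbar (secbar d) (img d perm sec T1) (img d perm sec T2)"
        by (rule rel_imp_eq_ev)
      then have "eq_ev d perm sec T1 T2" using inj_key[OF grp wr hyp T1(1) T2(1)] by simp
      then have "(T1, T2) \<in> table_rel G d perm sec" using ev_imp_rel[OF W T1(1) T2(1)] by simp
      then show "A = B" using cls_eq T1(2) T2(2) by simp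
    qed
    have surj: "?f ` carrier ?V = carrier ?W"
    proof
      show "?f ` carrier ?V \<subseteq> carrier ?W" using fcar by blast
    next
      show "carrier ?W \<subseteq> ?f ` carrier ?V"
      proof
        fix B assume B: "B \<in> carrier ?W"
        obtain S where S: "valid_table (Gbar G d perm sec) d S" "B = cls (Gbar G d perm sec) d permbar (secbar d) S"
          using B unfolding carrier_V by blast
        obtain T where T: "valid_table G d T" "img d perm sec T = S" using surj_img[OF S(1)] by blast
        have "cls G d perm sec T \<in> carrier ?V" unfolding carrier_V using T(1) by blast
        moreover have "B = ?f (cls G d perm sec T)" using natmap_cls[OF W T(1)] T(2) S(2) by simp
        ultimately show "B \<in> ?f ` carrier ?V" by (rule rev_image_eqI)
      qed
    qed
    show "?f \<in> iso ?V ?W" unfolding iso_def bij_betw_def using hom inj surj by blast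
  qed
qed


end
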